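(* Let $\mathcal H$ be a complex separable Hilbert space and let $T \in \mathcal B(\mathcal H)$ with polar decomposition $T = V|T|$. Then $$\|T - V\| = \min\{\|T - X\| : X \in \mathcal I,\ \ker(X) = \ker(T)\}.$$
   Context: $\mathcal B(\mathcal H)$ is the algebra of bounded linear operators on $\mathcal H$, and $\|\cdot\|$ is the operator norm. $\mathcal I$ denotes the set of all partial isometries on $\mathcal H$, i.e. $X \in \mathcal B(\mathcal H)$ with $XX^*X = X$. $|T| = (T^*T)^{1/2}$. The polar factor of $T$ is the unique $V \in \mathcal I$ with $T = V|T|$ and $\ker V = \ker T$. *)

theory Defs
  imports "HOL-Analysis.Analysis"
begin

text \<open>HOL-Analysis has only real inner product spaces, so a complex Hilbert space is
introduced as a class: a real Banach space with a complex scalar multiplication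
extending the real one and a complex inner product (linear in the second argument,
conjugate-linear in the first) inducing the norm.\<close>

class complex_hilbert = banach +
  fixes scaleC :: "complex \<Rightarrow> 'a \<Rightarrow> 'a" (infixr \<open>*\<^sub>C\<close> 75)
    and cinner :: "'a \<Rightarrow> 'a \<Rightarrow> complex"
  assumes scaleC_of_real: "scaleC (of_real r) x = r *\<^sub>R x"
    and scaleC_add_right: "scaleC a (x + y) = scaleC a x + scaleC a y"
    and scaleC_add_left: "scaleC (a + b) x = scaleC a x + scaleC b x"
    and scaleC_scaleC: "scaleC a (scaleC b x) = scaleC (a * b) x"
    and cinner_cnj: "cinner x y = cnj (cinner y x)"
    and cinner_add_right: "cinner x (y + z) = cinner x y + cinner x z"
    and cinner_scaleC_right: "cinner x (scaleC c y) = c * cinner x y"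
    and cinner_self_real: "Im (cinner x x) = 0"
    and cinner_self_nonneg: "0 \<le> Re (cinner x x)"
    and cinner_self_eq_zero: "cinner x x = 0 \<longleftrightarrow> x = 0"
    and norm_cinner: "norm x = sqrt (Re (cinner x x))"

definition bounded_op :: "('a::complex_hilbert \<Rightarrow> 'a) \<Rightarrow> bool" where
  "bounded_op T \<longleftrightarrow> bounded_linear T \<and> (\<forall>c x. T (c *\<^sub>C x) = c *\<^sub>C T x)"

text \<open>The Hilbert-space adjoint (exists uniquely for bounded operators by Riesz).\<close>
definition adj :: "('a::complex_hilbert \<Rightarrow> 'a) \<Rightarrow> ('a \<Rightarrow> 'a)" where
  "adj T = (THE S. \<forall>x y. cinner (T x) y = cinner x (S y))"

definition positive_op :: "('a::complex_hilbert \<Rightarrow> 'a) \<Rightarrow> bool" where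
  "positive_op P \<longleftrightarrow> bounded_op P \<and>
     (\<forall>x. Im (cinner x (P x)) = 0 \<and> 0 \<le> Re (cinner x (P x)))"

definition op_abs :: "('a::complex_hilbert \<Rightarrow> 'a) \<Rightarrow> ('a \<Rightarrow> 'a)" where
  "op_abs T = (THE P. positive_op P \<and> P \<circ> P = adj T \<circ> T)"

definition op_ker :: "('a::complex_hilbert \<Rightarrow> 'a) \<Rightarrow> 'a set" where
  "op_ker T = {x. T x = 0}"

definition partial_isometry :: "('a::complex_hilbert \<Rightarrow> 'a) \<Rightarrow> bool" where
  "partial_isometry X \<longleftrightarrow> bounded_op X \<and> X \<circ> adj X \<circ> X = X"

definition polar_factor :: "('a::complex_hilbert \<Rightarrow> 'a) \<Rightarrow> ('a \<Rightarrow> 'a)" where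
  "polar_factor T = (THE V. partial_isometry V \<and> T = V \<circ> op_abs T \<and> op_ker V = op_ker T)"

end

theory Submission
  imports Defs
begin



lemma scaleC_one [simp]: "(1::complex) *\<^sub>C (x::'a::complex_hilbert) = x"
  using scaleC_of_real[of 1 x] by simp

lemma scaleC_zero_left [simp]: "(0::complex) *\<^sub>C (x::'a::complex_hilbert) = 0"
  using scaleC_of_real[of 0 x] by simp

lemma scaleC_zero_right [simp]: "c *\<^sub>C (0::'a::complex_hilbert) = 0"
  using scaleC_add_right[of c 0 0] by simp

lemma scaleC_minus_right: "c *\<^sub>C (- x::'a::complex_hilbert) = - (c *\<^sub>C x)"
  using scaleC_add_right[of c x "-x"] by (simp add: eq_neg_iff_add_eq_0 add.commute)

lemma scaleC_diff_right: "c *\<^sub>C (x - y::'a::complex_hilbert) = c *\<^sub>C x - c *\<^sub>C y"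
  using scaleC_add_right[of c x "-y"] by (simp add: scaleC_minus_right)

lemma scaleC_minus_left: "(- c) *\<^sub>C (x::'a::complex_hilbert) = - (c *\<^sub>C x)"
  using scaleC_add_left[of c "-c" x] by (simp add: eq_neg_iff_add_eq_0 add.commute)

lemma scaleC_diff_left: "(c - d) *\<^sub>C (x::'a::complex_hilbert) = c *\<^sub>C x - d *\<^sub>C x"
  using scaleC_add_left[of c "-d" x] by (simp add: scaleC_minus_left)

lemma scaleC_scaleR: "c *\<^sub>C (r *\<^sub>R (x::'a::complex_hilbert)) = r *\<^sub>R (c *\<^sub>C x)"
  by (metis scaleC_of_real scaleC_scaleC mult.commute)

lemma cinner_zero_right [simp]: "cinner (x::'a::complex_hilbert) 0 = 0"
  using cinner_add_right[of x 0 0] by simp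

lemma cinner_zero_left [simp]: "cinner 0 (x::'a::complex_hilbert) = 0"
  by (subst cinner_cnj) simp

lemma cinner_add_left: "cinner (x + y) (z::'a::complex_hilbert) = cinner x z + cinner y z"
  by (subst (1 2 3) cinner_cnj) (simp add: cinner_add_right)

lemma cinner_minus_right: "cinner x (- y::'a::complex_hilbert) = - cinner x y"
  using cinner_add_right[of x y "-y"] by (simp add: eq_neg_iff_add_eq_0 add.commute)

lemma cinner_minus_left: "cinner (- x) (y::'a::complex_hilbert) = - cinner x y"
  by (subst (1 2) cinner_cnj) (simp add: cinner_minus_right)

lemma cinner_diff_right: "cinner x (y - z::'a::complex_hilbert) = cinner x y - cinner x z"
  using cinner_add_right[of x y "-z"] by (simp add: cinner_minus_right)

lemma cinner_diff_left: "cinner (x - y) (z::'a::complex_hilbert) = cinner x z - cinner y z"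
  using cinner_add_left[of x "-y" z] by (simp add: cinner_minus_left)

lemma cinner_scaleC_left: "cinner (c *\<^sub>C x) (y::'a::complex_hilbert) = cnj c * cinner x y"
  by (subst (1 2) cinner_cnj) (simp add: cinner_scaleC_right)

lemma cinner_scaleR_right: "cinner x (r *\<^sub>R y::'a::complex_hilbert) = of_real r * cinner x y"
  by (metis cinner_scaleC_right scaleC_of_real)

lemma cinner_scaleR_left: "cinner (r *\<^sub>R x) (y::'a::complex_hilbert) = of_real r * cinner x y"
  by (metis cinner_scaleC_left scaleC_of_real complex_cnj_complex_of_real)

lemma cinner_self: "cinner (x::'a::complex_hilbert) x = of_real ((norm x)\<^sup>2)"
proof -
  have "(norm x)\<^sup>2 = Re (cinner x x)" using norm_cinner[of x] cinner_self_nonneg[of x] by simp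
  then show ?thesis using cinner_self_real[of x] by (simp add: complex_eq_iff)
qed

lemma Re_cinner_self: "Re (cinner (x::'a::complex_hilbert) x) = (norm x)\<^sup>2"
  by (simp add: cinner_self)

lemma norm_add_sq: "(norm (x + y::'a::complex_hilbert))\<^sup>2 = (norm x)\<^sup>2 + 2 * Re (cinner x y) + (norm y)\<^sup>2"
proof -
  have "(norm (x+y))\<^sup>2 = Re (cinner x x + cinner x y + cinner y x + cinner y y)"
    by (simp add: Re_cinner_self[symmetric] cinner_add_left cinner_add_right del: Re_cinner_self)
  moreover have "Re (cinner y x) = Re (cinner x y)" by (subst cinner_cnj) simp
  ultimately show ?thesis by (simp add: Re_cinner_self)
qed

lemma norm_diff_sq: "(norm (x - y::'a::complex_hilbert))\<^sup>2 = (norm x)\<^sup>2 - 2 * Re (cinner x y) + (norm y)\<^sup>2"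
  using norm_add_sq[of x "-y"] by (simp add: cinner_minus_right)

lemma cinner_ext: "(\<And>z. cinner z a = cinner z (b::'a::complex_hilbert)) \<Longrightarrow> a = b"
proof -
  assume h: "\<And>z. cinner z a = cinner z b"
  have "cinner (a - b) (a - b) = 0" using h[of "a-b"] by (simp add: cinner_diff_right)
  then show ?thesis using cinner_self_eq_zero[of "a-b"] by simp
qed

lemma cinner_ext_left: "(\<And>z. cinner a z = cinner (b::'a::complex_hilbert) z) \<Longrightarrow> a = b"
  by (rule cinner_ext) (metis cinner_cnj)

lemma cinner_Cauchy_Schwarz: "cmod (cinner (x::'a::complex_hilbert) y) \<le> norm x * norm y"
proof (cases "y = 0")
  case True then show ?thesis by simp
next
  case False
  then have ny: "norm y > 0" by simp
  define a where "a = cinner y x / of_real ((norm y)\<^sup>2)"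
  define z where "z = x - a *\<^sub>C y"
  have yz: "cinner y z = 0" using ny
    by (simp add: z_def a_def cinner_diff_right cinner_scaleC_right cinner_self)
  have zy: "cinner z y = 0" by (subst cinner_cnj) (simp add: yz)
  have "x = z + a *\<^sub>C y" by (simp add: z_def)
  then have "cinner x x = cinner z z + a * cinner z y + cnj a * cinner y z + cnj a * a * cinner y y"
    by (simp add: cinner_add_left cinner_add_right cinner_scaleC_left cinner_scaleC_right
        algebra_simps)
  then have "(norm x)\<^sup>2 = (norm z)\<^sup>2 + (cmod a)\<^sup>2 * (norm y)\<^sup>2"
    using yz zy cmod_power2[of a]
    by (simp add: cinner_self complex_eq_iff power2_eq_square algebra_simps)
  then have "(cmod a)\<^sup>2 * (norm y)\<^sup>2 \<le> (norm x)\<^sup>2" by simp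
  moreover have "cmod a = cmod (cinner x y) / (norm y)\<^sup>2"
    using ny unfolding a_def by (subst cinner_cnj) (simp add: norm_divide norm_power)
  ultimately have "(cmod (cinner x y))\<^sup>2 / (norm y)\<^sup>2 \<le> (norm x)\<^sup>2"
    using ny by (simp add: power_divide power2_eq_square field_simps)
  then have "(cmod (cinner x y))\<^sup>2 \<le> (norm x * norm y)\<^sup>2"
    using ny by (simp add: field_simps power_mult_distrib)
  then show ?thesis by (rule power2_le_imp_le) simp
qed

lemma bounded_linear_cinner_right: "bounded_linear (\<lambda>y. cinner (x::'a::complex_hilbert) y)"
  by (rule bounded_linear_intro[where K="norm x"])
     (simp_all add: cinner_add_right cinner_scaleR_right scaleR_conv_of_real,
      metis cinner_Cauchy_Schwarz mult.commute)

lemma bounded_linear_cinner_left: "bounded_linear (\<lambda>x. cinner x (y::'a::complex_hilbert))"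
proof -
  have "bounded_linear (\<lambda>x. cnj (cinner y x))"
    by (rule bounded_linear_compose[OF bounded_linear_cnj bounded_linear_cinner_right])
  then show ?thesis by (subst cinner_cnj) simp
qed

lemma tendsto_cinner [tendsto_intros]:
  fixes f g :: "'b \<Rightarrow> 'a::complex_hilbert"
  assumes "(f \<longlongrightarrow> a) F" "(g \<longlongrightarrow> b) F"
  shows "((\<lambda>t. cinner (f t) (g t)) \<longlongrightarrow> cinner a b) F"
proof -
  have bb: "bounded_bilinear (\<lambda>x y. cinner (x::'a) y)"
  proof (rule bounded_bilinear.intro)
    show "\<exists>K. \<forall>a b. norm (cinner (a::'a) b) \<le> norm a * norm b * K"
      by (rule exI[of _ 1]) (simp add: cinner_Cauchy_Schwarz)
  qed (auto simp: cinner_add_left cinner_add_right cinner_scaleR_left cinner_scaleR_right scaleR_conv_of_real)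
  show ?thesis by (rule bounded_bilinear.tendsto[OF bb assms])
qed

lemma norm_scaleC: "norm (c *\<^sub>C (x::'a::complex_hilbert)) = cmod c * norm x"
proof -
  have "(norm (c *\<^sub>C x))\<^sup>2 = Re (c * cnj c * cinner x x)"
    by (simp only: Re_cinner_self[symmetric] cinner_scaleC_left cinner_scaleC_right mult.assoc)
  also have "\<dots> = (cmod c * norm x)\<^sup>2"
    by (simp only: complex_mult_cnj cinner_self cmod_power2 power_mult_distrib flip: of_real_mult) simp
  finally show ?thesis
    by (metis norm_ge_zero zero_le_mult_iff power2_eq_iff_nonneg)
qed

lemma bounded_linear_scaleC: "bounded_linear (\<lambda>x::'a::complex_hilbert. c *\<^sub>C x)"
  by (rule bounded_linear_intro[where K="cmod c"])
     (auto simp: scaleC_add_right scaleC_scaleR norm_scaleC mult.commute)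




section \<open>Projection theorem\<close>

definition csubspace :: "'a::complex_hilbert set \<Rightarrow> bool" where
  "csubspace K \<longleftrightarrow> 0 \<in> K \<and> (\<forall>x\<in>K. \<forall>y\<in>K. x + y \<in> K) \<and> (\<forall>c. \<forall>x\<in>K. c *\<^sub>C x \<in> K)"

lemma csubspace_scaleR: "csubspace K \<Longrightarrow> x \<in> K \<Longrightarrow> r *\<^sub>R x \<in> K"
  unfolding csubspace_def by (metis scaleC_of_real)

lemma csubspace_minus: "csubspace K \<Longrightarrow> x \<in> K \<Longrightarrow> - x \<in> K"
  using csubspace_scaleR[of K x "-1"] by simp

lemma csubspace_diff: "csubspace K \<Longrightarrow> x \<in> K \<Longrightarrow> y \<in> K \<Longrightarrow> x - y \<in> K"
  using csubspace_minus[of K y] unfolding csubspace_def by (metis diff_conv_add_uminus)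

lemma csubspace_add: "csubspace K \<Longrightarrow> x \<in> K \<Longrightarrow> y \<in> K \<Longrightarrow> x + y \<in> K"
  unfolding csubspace_def by blast

lemma csubspace_scaleC: "csubspace K \<Longrightarrow> x \<in> K \<Longrightarrow> c *\<^sub>C x \<in> K"
  unfolding csubspace_def by blast

lemma csubspace_zero: "csubspace K \<Longrightarrow> 0 \<in> K"
  unfolding csubspace_def by blast

lemma parallelogram:
  "(norm (a + b::'a::complex_hilbert))\<^sup>2 + (norm (a - b))\<^sup>2 = 2 * (norm a)\<^sup>2 + 2 * (norm b)\<^sup>2"
  by (simp add: norm_add_sq norm_diff_sq)

lemma projection_exists:
  fixes x :: "'a::complex_hilbert"
  assumes K: "csubspace K" and cl: "closed K"
  shows "\<exists>p\<in>K. \<forall>k\<in>K. cinner k (x - p) = 0"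
proof -
  define d where "d = infdist x K"
  have Kne: "K \<noteq> {}" using csubspace_zero[OF K] by blast
  have dle: "d \<le> norm (x - k)" if "k \<in> K" for k
    using infdist_le[OF that, of x] by (simp add: d_def dist_norm)
  have d0: "0 \<le> d" by (simp add: d_def infdist_nonneg)
  have near: "\<exists>k\<in>K. norm (x - k) < d + e" if "e > 0" for e
  proof (rule ccontr)
    assume "\<not> ?thesis"
    then have "\<forall>k\<in>K. d + e \<le> dist x k" by (auto simp: dist_norm not_less)
    then have "d + e \<le> infdist x K" unfolding infdist_notempty[OF Kne]
      by (intro cINF_greatest Kne) auto
    then show False using that d_def by simp
  qed
  define eps :: "nat \<Rightarrow> real" where "eps n = 1 / (real n + 1)" for n
  have eps_pos: "eps n > 0" for n by (simp add: eps_def)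
  have eps_le1: "eps n \<le> 1" for n by (simp add: eps_def)
  obtain k where kK: "\<And>n. k n \<in> K" and kd: "\<And>n. norm (x - k n) < d + eps n"
    using near[OF eps_pos] by metis
  have sq: "(norm (x - k n))\<^sup>2 \<le> d\<^sup>2 + (2*d+1) * eps n" for n
  proof -
    have "(norm (x - k n))\<^sup>2 \<le> (d + eps n)\<^sup>2"
      using kd[of n] by (intro power_mono) auto
    also have "\<dots> = d\<^sup>2 + (2*d + eps n) * eps n" by (simp add: power2_eq_square algebra_simps)
    also have "\<dots> \<le> d\<^sup>2 + (2*d+1) * eps n"
      using eps_le1[of n] eps_pos[of n] by (intro add_left_mono mult_right_mono) auto
    finally show ?thesis .
  qed
  have diffb: "(norm (k n - k m))\<^sup>2 \<le> 2 * (2*d+1) * (eps n + eps m)" for n m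
  proof -
    have mid: "(1/2) *\<^sub>R (k n + k m) \<in> K"
      using K kK by (intro csubspace_scaleR csubspace_add) auto
    have "x - (1/2) *\<^sub>R (k n + k m) = (1/2) *\<^sub>R ((x - k n) + (x - k m))"
      by (simp add: algebra_simps) (metis field_sum_of_halves scaleR_add_left scaleR_one)
    then have "norm ((x - k n) + (x - k m)) = 2 * norm (x - (1/2) *\<^sub>R (k n + k m))"
      by simp
    then have "(norm ((x - k n) + (x - k m)))\<^sup>2 \<ge> 4 * d\<^sup>2"
      using dle[OF mid] d0 by (simp add: power2_eq_square mult_mono)
    moreover have "(x - k n) - (x - k m) = k m - k n" by simp
    ultimately have "(norm (k m - k n))\<^sup>2 \<le> 2 * (norm (x - k n))\<^sup>2 + 2 * (norm (x - k m))\<^sup>2 - 4 * d\<^sup>2"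
      using parallelogram[of "x - k n" "x - k m"] by (simp only:)
    then show ?thesis using sq[of n] sq[of m] by (simp add: norm_minus_commute algebra_simps)
  qed
  have "Cauchy k"
  proof (rule CauchyI)
    fix e :: real assume e: "e > 0"
    obtain N :: nat where N: "4 * (2*d+1) / (e\<^sup>2) < real N + 1"
      using reals_Archimedean2[of "4 * (2*d+1) / (e\<^sup>2)"] by (meson less_add_one less_trans)
    have "4 * (2*d+1) * eps N < e\<^sup>2"
      using N e d0 by (simp add: eps_def field_simps)
    show "\<exists>M. \<forall>m\<ge>M. \<forall>n\<ge>M. norm (k m - k n) < e"
    proof (intro exI allI impI)
      fix m n assume mn: "N \<le> m" "N \<le> n"
      have em: "eps m \<le> eps N" "eps n \<le> eps N" using mn by (auto simp: eps_def frac_le)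
      have "(norm (k m - k n))\<^sup>2 \<le> 2 * (2*d+1) * (eps m + eps n)" by (rule diffb)
      also have "\<dots> \<le> 2 * (2*d+1) * (2 * eps N)" using em d0 by (intro mult_left_mono) auto
      also have "\<dots> = 4 * (2*d+1) * eps N" by simp
      also have "\<dots> < e\<^sup>2" by fact
      finally show "norm (k m - k n) < e" using e by (simp add: power_less_imp_less_base)
    qed
  qed
  then obtain p where kp: "k \<longlonglongrightarrow> p" using Cauchy_convergent_iff convergent_def by blast
  have pK: "p \<in> K" using closed_sequentially[OF cl] kK kp by blast
  have epsl: "eps \<longlonglongrightarrow> 0" unfolding eps_def using LIMSEQ_inverse_real_of_nat by (simp add: inverse_eq_divide add.commute)
  have "norm (x - p) \<le> d"
  proof (rule tendsto_le[OF trivial_limit_sequentially])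
    show "(\<lambda>n. norm (x - k n)) \<longlonglongrightarrow> norm (x - p)" by (intro tendsto_intros kp)
    show "(\<lambda>n. d + eps n) \<longlonglongrightarrow> d" using tendsto_add[OF tendsto_const epsl, of d] by simp
    show "\<forall>\<^sub>F n in sequentially. norm (x - k n) \<le> d + eps n" using kd by (intro always_eventually allI less_imp_le)
  qed
  then have minp: "norm (x - p) \<le> norm (x - q)" if "q \<in> K" for q using dle[OF that] by linarith
  define z where "z = x - p"
  have Re0: "Re (cinner z w) = 0" if w: "w \<in> K" for w
  proof (cases "w = 0")
    case True then show ?thesis by simp
  next
    case False
    then have nw: "(norm w)\<^sup>2 > 0" by simp
    define a where "a = Re (cinner z w)"
    define t where "t = a / (norm w)\<^sup>2"
    have "p + t *\<^sub>R w \<in> K" using K pK w by (intro csubspace_add csubspace_scaleR) auto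
    then have "norm z \<le> norm (z - t *\<^sub>R w)"
      using minp z_def by (metis diff_diff_eq)
    then have "(norm z)\<^sup>2 \<le> (norm (z - t *\<^sub>R w))\<^sup>2" by (simp add: power_mono)
    also have "\<dots> = (norm z)\<^sup>2 - 2 * t * a + t\<^sup>2 * (norm w)\<^sup>2"
      by (simp add: norm_diff_sq cinner_scaleR_right a_def power_mult_distrib)
    finally have "0 \<le> - 2 * t * a + t\<^sup>2 * (norm w)\<^sup>2" by simp
    also have "\<dots> = - a\<^sup>2 / (norm w)\<^sup>2" using nw by (simp add: t_def power2_eq_square field_simps)
    finally have "0 \<le> - a\<^sup>2 / (norm w)\<^sup>2" .
    then have "a\<^sup>2 \<le> 0" using nw by (simp add: divide_le_0_iff)
    then show ?thesis by (simp add: a_def)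
  qed
  have "cinner w z = 0" if w: "w \<in> K" for w
  proof -
    have "Re (cinner z w) = 0" by (rule Re0[OF w])
    moreover have "Re (cinner z (\<i> *\<^sub>C w)) = 0" by (rule Re0) (rule csubspace_scaleC[OF K w])
    ultimately have "cinner z w = 0" by (simp add: cinner_scaleC_right complex_eq_iff)
    then show ?thesis by (subst cinner_cnj) simp
  qed
  then show ?thesis using pK z_def by blast
qed




lemma bop_lin: "bounded_op T \<Longrightarrow> bounded_linear T"
  by (simp add: bounded_op_def)

lemma bop_C: "bounded_op T \<Longrightarrow> T (c *\<^sub>C x) = c *\<^sub>C T x"
  by (simp add: bounded_op_def)

lemma bop_add: "bounded_op T \<Longrightarrow> T (x + y) = T x + T y"
  by (simp add: bounded_op_def linear_simps)
lemma bop_diff: "bounded_op T \<Longrightarrow> T (x - y) = T x - T y"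
  by (simp add: bounded_op_def linear_simps)
lemma bop_minus: "bounded_op T \<Longrightarrow> T (- x) = - T x"
  by (simp add: bounded_op_def linear_simps)
lemma bop_zero: "bounded_op T \<Longrightarrow> T 0 = 0"
  by (simp add: bounded_op_def linear_simps)
lemma bop_scaleR: "bounded_op T \<Longrightarrow> T (r *\<^sub>R x) = r *\<^sub>R T x"
  by (simp add: bounded_op_def linear_simps)

lemma bop_norm: "bounded_op T \<Longrightarrow> norm (T x) \<le> onorm T * norm x"
  by (rule onorm) (simp add: bounded_op_def)

lemma bop_onorm_nonneg: "bounded_op T \<Longrightarrow> 0 \<le> onorm T"
  by (rule onorm_pos_le) (simp add: bounded_op_def)

lemma bop_id: "bounded_op (\<lambda>x. x)"
  by (simp add: bounded_op_def bounded_linear_ident)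

lemma bop_zero_op: "bounded_op (\<lambda>x. 0)"
  by (simp add: bounded_op_def bounded_linear_zero)

lemma bop_comp: "bounded_op S \<Longrightarrow> bounded_op T \<Longrightarrow> bounded_op (\<lambda>x. S (T x))"
  unfolding bounded_op_def using bounded_linear_compose[of S T] by (simp add: o_def)

lemma bop_comp': "bounded_op S \<Longrightarrow> bounded_op T \<Longrightarrow> bounded_op (S \<circ> T)"
  using bop_comp[of S T] by (simp add: o_def)

lemma bop_plus: "bounded_op S \<Longrightarrow> bounded_op T \<Longrightarrow> bounded_op (\<lambda>x. S x + T x)"
  unfolding bounded_op_def by (auto intro: bounded_linear_add simp: scaleC_add_right)

lemma bop_minus_op: "bounded_op S \<Longrightarrow> bounded_op T \<Longrightarrow> bounded_op (\<lambda>x. S x - T x)"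
  unfolding bounded_op_def by (auto intro: bounded_linear_sub simp: scaleC_diff_right)

lemma bop_scale: "bounded_op S \<Longrightarrow> bounded_op (\<lambda>x. r *\<^sub>R S x)"
  unfolding bounded_op_def
  by (auto intro: bounded_linear_compose[OF bounded_linear_scaleR_right, of S, simplified o_def]
      simp: scaleC_scaleR)

section \<open>Riesz representation and adjoints\<close>

lemma riesz:
  fixes g :: "'a::complex_hilbert \<Rightarrow> complex"
  assumes bl: "bounded_linear g" and hC: "\<And>c x. g (c *\<^sub>C x) = c * g x"
  shows "\<exists>w. \<forall>x. g x = cinner w x"
proof (cases "\<forall>x. g x = 0")
  case True then show ?thesis by (intro exI[of _ 0]) simp
next
  case False
  then obtain x0 where gx0: "g x0 \<noteq> 0" by blast
  define K where "K = {x. g x = 0}"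
  have lin: "g (x + y) = g x + g y" "g (x - y) = g x - g y" "g 0 = 0" for x y
    using bl by (simp_all add: linear_simps)
  have K: "csubspace K" unfolding csubspace_def K_def using lin hC by auto
  have cl: "closed K" unfolding K_def
    by (intro closed_Collect_eq linear_continuous_on bl continuous_on_const)
  obtain p where pK: "p \<in> K" and orth: "\<And>k. k \<in> K \<Longrightarrow> cinner k (x0 - p) = 0"
    using projection_exists[OF K cl, of x0] by blast
  define u where "u = x0 - p"
  have gu: "g u \<noteq> 0" using gx0 pK by (simp add: u_def lin K_def)
  then have u0: "u \<noteq> 0" using lin by auto
  then have nu: "(norm u)\<^sup>2 \<noteq> 0" by simp
  have "g x = cinner ((cnj (g u) / of_real ((norm u)\<^sup>2)) *\<^sub>C u) x" for x
  proof -
    define v where "v = x - (g x / g u) *\<^sub>C u"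
    have "g v = 0" using gu by (simp add: v_def lin hC)
    then have "cinner v u = 0" using orth[of v] by (simp add: K_def u_def)
    then have "cinner x u = cnj (g x / g u) * of_real ((norm u)\<^sup>2)"
      by (simp add: v_def cinner_diff_left cinner_scaleC_left cinner_self)
    then have "cinner u x = (g x / g u) * of_real ((norm u)\<^sup>2)"
      by (subst cinner_cnj) simp
    then show ?thesis using gu nu by (simp add: cinner_scaleC_left field_simps)
  qed
  then show ?thesis by blast
qed

lemma adj_exists:
  assumes T: "bounded_op T"
  shows "\<exists>S. \<forall>x y. cinner (T x) y = cinner x (S y)"
proof -
  have "\<exists>w. \<forall>x. cinner (T x) y = cinner x w" for y
  proof -
    have "\<exists>w. \<forall>x. cinner y (T x) = cinner w x"
    proof (rule riesz)
      show "bounded_linear (\<lambda>x. cinner y (T x))"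
        using bounded_linear_compose[OF bounded_linear_cinner_right bop_lin[OF T]] by (simp add: o_def)
      show "cinner y (T (c *\<^sub>C x)) = c * cinner y (T x)" for c x
        by (simp add: bop_C[OF T] cinner_scaleC_right)
    qed
    then obtain w where "\<forall>x. cinner y (T x) = cinner w x" by blast
    then have "\<forall>x. cinner (T x) y = cinner x w" by (metis cinner_cnj)
    then show ?thesis by blast
  qed
  then have "\<forall>y. \<exists>w. \<forall>x. cinner (T x) y = cinner x w" by blast
  then obtain S where "\<forall>y. \<forall>x. cinner (T x) y = cinner x (S y)" using choice[of "\<lambda>y w. \<forall>x. cinner (T x) y = cinner x w"] by blast
  then show ?thesis by blast
qed

lemma adj_unique:
  assumes "\<And>x y. cinner (T x) y = cinner x (S y)"
  shows "adj T = S"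
  unfolding adj_def
proof (rule the_equality)
  show "\<forall>x y. cinner (T x) y = cinner x (S y)" using assms by blast
  fix S' assume h: "\<forall>x y. cinner (T x) y = cinner x (S' y)"
  show "S' = S"
  proof
    fix y show "S' y = S y" by (rule cinner_ext) (simp add: h[rule_format, symmetric] assms)
  qed
qed

lemma adj_prop: "bounded_op T \<Longrightarrow> cinner (T x) y = cinner x (adj T y)"
proof -
  assume T: "bounded_op T"
  obtain S where S: "\<forall>x y. cinner (T x) y = cinner x (S y)" using adj_exists[OF T] by blast
  then have "adj T = S" by (intro adj_unique) blast
  then show ?thesis using S by simp
qed

lemma adj_prop2: "bounded_op T \<Longrightarrow> cinner x (T y) = cinner (adj T x) y"
  by (metis adj_prop cinner_cnj)

lemma bop_adj:
  assumes T: "bounded_op T"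
  shows "bounded_op (adj T)"
proof -
  let ?S = "adj T"
  have add: "?S (y1 + y2) = ?S y1 + ?S y2" for y1 y2
    by (rule cinner_ext) (simp add: adj_prop[OF T, symmetric] cinner_add_right)
  have sc: "?S (c *\<^sub>C y) = c *\<^sub>C ?S y" for c y
    by (rule cinner_ext) (simp add: adj_prop[OF T, symmetric] cinner_scaleC_right)
  have bd: "norm (?S y) \<le> norm y * onorm T" for y
  proof -
    have "(norm (?S y))\<^sup>2 = Re (cinner (T (?S y)) y)"
      by (simp add: adj_prop[OF T] Re_cinner_self)
    also have "\<dots> \<le> cmod (cinner (T (?S y)) y)" by (rule complex_Re_le_cmod)
    also have "\<dots> \<le> norm (T (?S y)) * norm y" by (rule cinner_Cauchy_Schwarz)
    also have "\<dots> \<le> onorm T * norm (?S y) * norm y"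
      by (intro mult_right_mono bop_norm[OF T]) simp
    finally have "norm (?S y) * norm (?S y) \<le> (onorm T * norm y) * norm (?S y)"
      by (simp add: power2_eq_square algebra_simps)
    then show ?thesis
      by (cases "norm (?S y) = 0") (auto simp: mult.commute bop_onorm_nonneg[OF T])
  qed
  have "bounded_linear ?S"
    by (rule bounded_linear_intro[OF add _ bd]) (metis sc scaleC_of_real)
  then show ?thesis using sc by (simp add: bounded_op_def)
qed

lemma adj_adj: "bounded_op T \<Longrightarrow> adj (adj T) = T"
proof -
  assume T: "bounded_op T"
  show ?thesis by (rule adj_unique) (subst (1 2) cinner_cnj, simp add: adj_prop[OF T])
qed

definition selfadj :: "('a::complex_hilbert \<Rightarrow> 'a) \<Rightarrow> bool" where
  "selfadj H \<longleftrightarrow> bounded_op H \<and> (\<forall>x y. cinner (H x) y = cinner x (H y))"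

lemma selfadj_adj: "selfadj H \<Longrightarrow> adj H = H"
  unfolding selfadj_def by (intro adj_unique) blast

lemma selfadj_real: "selfadj H \<Longrightarrow> cinner x (H x) = of_real (Re (cinner x (H x)))"
proof -
  assume "selfadj H"
  then have "cinner x (H x) = cnj (cinner x (H x))" unfolding selfadj_def by (metis cinner_cnj)
  then have "Im (cinner x (H x)) = 0" by (metis cnj.simps(2) complex_eq_iff neg_equal_zero)
  then show ?thesis by (simp add: complex_eq_iff)
qed

lemma positive_selfadj:
  assumes P: "positive_op P"
  shows "selfadj P"
proof -
  have bP: "bounded_op P" using P by (simp add: positive_op_def)
  define h where "h x y = cinner x (P y) - cinner (P x) y" for x y
  have hxx: "h x x = 0" for x
  proof -
    have "Im (cinner x (P x)) = 0" using P by (simp add: positive_op_def)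
    then have "cinner (P x) x = cinner x (P x)"
      by (subst cinner_cnj) (simp add: complex_eq_iff)
    then show ?thesis by (simp add: h_def)
  qed
  have hadd: "h (x + y) (x + y) = h x x + h x y + h y x + h y y" for x y
    by (simp add: h_def bop_add[OF bP] cinner_add_left cinner_add_right)
  have hi1: "h x (\<i> *\<^sub>C y) = \<i> * h x y" for x y
    by (simp add: h_def bop_C[OF bP] cinner_scaleC_right algebra_simps)
  have hi2: "h (\<i> *\<^sub>C y) x = - \<i> * h y x" for x y
    by (simp add: h_def bop_C[OF bP] cinner_scaleC_left algebra_simps)
  have "h x y = 0" for x y
  proof -
    have 1: "h x y + h y x = 0" using hadd[of x y] hxx by simp
    have "h x (\<i> *\<^sub>C y) + h (\<i> *\<^sub>C y) x = 0"
      using hadd[of x "\<i> *\<^sub>C y"] hxx by simp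
    then have "\<i> * (h x y - h y x) = 0" using hi1 hi2 by (simp add: algebra_simps)
    then have 2: "h x y = h y x" by simp
    from 1 show ?thesis unfolding 2 by simp
  qed
  then show ?thesis unfolding selfadj_def h_def using bP by simp
qed




section \<open>Numerical radius and Cauchy-Schwarz for positive operators\<close>

definition invariant :: "('a::complex_hilbert \<Rightarrow> 'a) \<Rightarrow> 'a set \<Rightarrow> bool" where
  "invariant D M \<longleftrightarrow> csubspace M \<and> (\<forall>v\<in>M. D v \<in> M)"

lemma invariant_UNIV: "invariant D UNIV"
  by (simp add: invariant_def csubspace_def)

lemma selfadj_cinner_sym: "selfadj D \<Longrightarrow> cinner x (D y) = cinner (D x) y"
  by (simp add: selfadj_def)

lemma numrad:
  assumes D: "selfadj D" and M: "invariant D M"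
    and r: "\<And>v. v \<in> M \<Longrightarrow> \<bar>Re (cinner v (D v))\<bar> \<le> r * (norm v)\<^sup>2"
    and u: "u \<in> M"
  shows "norm (D u) \<le> r * norm u"
proof -
  have bD: "bounded_op D" using D by (simp add: selfadj_def)
  have csM: "csubspace M" using M by (simp add: invariant_def)
  have DM: "D v \<in> M" if "v \<in> M" for v using M that by (simp add: invariant_def)
  have key: "4 * Re (cinner x (D y)) \<le> 2 * r * ((norm x)\<^sup>2 + (norm y)\<^sup>2)" if xy: "x \<in> M" "y \<in> M" for x y
  proof -
    have e: "cinner (x + y) (D (x + y)) - cinner (x - y) (D (x - y)) = 2 * cinner x (D y) + 2 * cinner y (D x)"
      by (simp add: bop_add[OF bD] bop_diff[OF bD] cinner_add_left cinner_add_right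
          cinner_diff_left cinner_diff_right algebra_simps)
    have "Re (cinner y (D x)) = Re (cinner x (D y))"
      using selfadj_cinner_sym[OF D, of y x] by (subst (asm) cinner_cnj) simp
    then have "Re (cinner (x + y) (D (x + y))) - Re (cinner (x - y) (D (x - y))) = 4 * Re (cinner x (D y))"
      using arg_cong[OF e, of Re] by simp
    moreover have "Re (cinner (x + y) (D (x + y))) \<le> r * (norm (x + y))\<^sup>2"
      using r[of "x+y"] csubspace_add[OF csM xy] by simp
    moreover have "- Re (cinner (x - y) (D (x - y))) \<le> r * (norm (x - y))\<^sup>2"
      using r[of "x-y"] csubspace_diff[OF csM xy] by simp
    moreover have "r * (norm (x + y))\<^sup>2 + r * (norm (x - y))\<^sup>2 = 2 * r * ((norm x)\<^sup>2 + (norm y)\<^sup>2)"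
      using parallelogram[of x y] by (metis (no_types, lifting) add.commute distrib_left mult.assoc mult.left_commute)
    ultimately show ?thesis by linarith
  qed
  show ?thesis
  proof (cases "D u = 0 \<or> u = 0")
    case True
    then show ?thesis
    proof
      assume "u = 0" then show ?thesis by (simp add: bop_zero[OF bD])
    next
      assume Du: "D u = 0"
      have "0 \<le> r * (norm u)\<^sup>2" using r[OF u] by (meson abs_ge_zero order_trans)
      then have "0 \<le> r * norm u"
      proof (cases "u = 0")
        case False
        then have "(norm u)\<^sup>2 > 0" by simp
        then have "0 \<le> r" using \<open>0 \<le> r * (norm u)\<^sup>2\<close> by (simp add: zero_le_mult_iff)
        then show ?thesis by simp
      qed simp
      then show ?thesis using Du by simp
    qed
  next
    case False
    then have nDu: "norm (D u) > 0" and nu: "norm u > 0" by auto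
    define x where "x = (norm u / norm (D u)) *\<^sub>R D u"
    have xM: "x \<in> M" unfolding x_def using csubspace_scaleR[OF csM DM[OF u]] .
    have nx: "norm x = norm u" using nDu by (simp add: x_def)
    have "Re (cinner x (D u)) = norm u * norm (D u)"
      using nDu by (simp add: x_def cinner_scaleR_left Re_cinner_self power2_eq_square)
    then have "4 * (norm u * norm (D u)) \<le> 2 * r * ((norm u)\<^sup>2 + (norm u)\<^sup>2)"
      using key[OF xM u] nx by simp
    then have "norm u * norm (D u) \<le> norm u * (r * norm u)" by (simp add: power2_eq_square algebra_simps)
    then show ?thesis using nu by simp
  qed
qed

lemma posCS:
  assumes C: "selfadj C" and M: "invariant C M"
    and pos: "\<And>v. v \<in> M \<Longrightarrow> 0 \<le> Re (cinner v (C v))"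
    and x: "x \<in> M"
  shows "(norm (C x))\<^sup>2 \<le> onorm C * Re (cinner x (C x))"
proof -
  have bC: "bounded_op C" using C by (simp add: selfadj_def)
  have csM: "csubspace M" using M by (simp add: invariant_def)
  have CM: "C v \<in> M" if "v \<in> M" for v using M that by (simp add: invariant_def)
  define K where "K = onorm C"
  have K0: "0 \<le> K" using bop_onorm_nonneg[OF bC] by (simp add: K_def)
  define a where "a = (norm (C x))\<^sup>2"
  define q where "q = Re (cinner x (C x))"
  have q0: "0 \<le> q" using pos[OF x] by (simp add: q_def)
  show ?thesis
  proof (cases "K = 0")
    case True
    then have "norm (C x) = 0" using bop_norm[OF bC, of x] K_def by (simp add: norm_le_zero_iff)
    then show ?thesis by simp
  next
    case False
    then have Kp: "K > 0" using K0 by simp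
    have b: "Re (cinner (C x) (C (C x))) \<le> K * a"
    proof -
      have "Re (cinner (C x) (C (C x))) \<le> cmod (cinner (C x) (C (C x)))" by (rule complex_Re_le_cmod)
      also have "\<dots> \<le> norm (C x) * norm (C (C x))" by (rule cinner_Cauchy_Schwarz)
      also have "\<dots> \<le> norm (C x) * (K * norm (C x))"
        using bop_norm[OF bC, of "C x"] by (simp add: K_def mult_left_mono)
      finally show ?thesis by (simp add: a_def power2_eq_square algebra_simps)
    qed
    define t where "t = 1 / K"
    have "x - t *\<^sub>R C x \<in> M" using csM x CM[OF x] by (intro csubspace_diff csubspace_scaleR)
    then have "0 \<le> Re (cinner (x - t *\<^sub>R C x) (C (x - t *\<^sub>R C x)))" by (rule pos)
    also have "\<dots> = q - 2 * t * a + t\<^sup>2 * Re (cinner (C x) (C (C x)))"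
    proof -
      have s: "cinner x (C (C x)) = cinner (C x) (C x)" by (rule selfadj_cinner_sym[OF C])
      have "cinner (x - t *\<^sub>R C x) (C (x - t *\<^sub>R C x)) =
        cinner x (C x) - of_real t * cinner x (C (C x)) - of_real t * cinner (C x) (C x)
          + of_real t * of_real t * cinner (C x) (C (C x))"
        by (simp add: bop_diff[OF bC] bop_scaleR[OF bC] cinner_diff_left cinner_diff_right
            cinner_scaleR_left cinner_scaleR_right algebra_simps)
      then show ?thesis by (simp add: s q_def a_def Re_cinner_self power2_eq_square)
    qed
    also have "\<dots> \<le> q - 2 * t * a + t\<^sup>2 * (K * a)"
      using b by (intro add_left_mono mult_left_mono) auto
    also have "\<dots> = q - a / K" using Kp by (simp add: t_def power2_eq_square field_simps)
    finally have "a \<le> K * q" using Kp by (simp add: field_simps)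
    then show ?thesis by (simp add: a_def q_def K_def)
  qed
qed




section \<open>Coefficients of the square-root series\<close>

fun sqc :: "nat \<Rightarrow> real" where
  "sqc 0 = 0"
| "sqc (Suc 0) = 1/2"
| "sqc (Suc (Suc n)) = (1/2) * (\<Sum>i\<in>{1..Suc n}. sqc i * sqc (Suc (Suc n) - i))"

lemma sqc_nonneg: "0 \<le> sqc n"
proof (induction n rule: less_induct)
  case (less n)
  show ?case
  proof (cases n rule: sqc.cases)
    case (3 m)
    have "0 \<le> (\<Sum>i\<in>{1..Suc m}. sqc i * sqc (Suc (Suc m) - i))"
      using less 3 by (intro sum_nonneg mult_nonneg_nonneg) auto
    then show ?thesis using 3 by simp
  qed auto
qed

lemma sqc_conv: "(\<Sum>i\<le>n. sqc i * sqc (n - i)) = 2 * sqc n - (if n = 1 then 1 else 0)"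
proof (cases n rule: sqc.cases)
  case 1 then show ?thesis by simp
next
  case 2 then show ?thesis by simp
next
  case (3 m)
  have "(\<Sum>i\<le>n. sqc i * sqc (n - i)) = (\<Sum>i\<in>{1..Suc m}. sqc i * sqc (n - i))"
  proof (rule sum.mono_neutral_right)
    show "\<forall>i\<in>{..n} - {1..Suc m}. sqc i * sqc (n - i) = 0"
    proof
      fix i assume "i \<in> {..n} - {1..Suc m}"
      then have "i = 0 \<or> i = n" using 3 by auto
      then show "sqc i * sqc (n - i) = 0" by auto
    qed
  qed (use 3 in auto)
  then show ?thesis using 3 by simp
qed

lemma sqc_partial: "(\<Sum>k\<le>N. sqc k) \<le> 1"
proof (induction N rule: less_induct)
  case (less N)
  show ?case
  proof (cases N)
    case 0 then show ?thesis by simp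
  next
    case (Suc M)
    have tri: "(\<Sum>n\<le>N. \<Sum>i\<le>n. sqc i * sqc (n - i)) \<le> (\<Sum>k\<le>M. sqc k)\<^sup>2"
    proof -
      have "(\<Sum>n\<le>N. \<Sum>i\<le>n. sqc i * sqc (n - i)) = (\<Sum>(i,j)\<in>{(i,j). i + j \<le> N}. sqc i * sqc j)"
        by (rule sum.triangle_reindex_eq[symmetric])
      also have "\<dots> = (\<Sum>(i,j)\<in>{(i,j). i + j \<le> N \<and> 0 < i \<and> 0 < j}. sqc i * sqc j)"
      proof (rule sum.mono_neutral_right)
        have "{(i,j). i + j \<le> N} \<subseteq> {..N} \<times> {..N}" by auto
        then show "finite {(i,j). i + j \<le> N}" by (rule finite_subset) auto
      qed (auto intro!: gr0I)
      also have "\<dots> \<le> (\<Sum>(i,j)\<in>{..M} \<times> {..M}. sqc i * sqc j)"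
        by (rule sum_mono2) (auto simp: Suc sqc_nonneg)
      also have "\<dots> = (\<Sum>k\<le>M. sqc k)\<^sup>2"
        by (simp add: sum_product sum.cartesian_product power2_eq_square)
      finally show ?thesis .
    qed
    have "(\<Sum>k\<le>N. sqc k) = (\<Sum>k\<le>N. (1/2) * (\<Sum>i\<le>k. sqc i * sqc (k - i)) + (1/2) * (if k = 1 then 1 else 0))"
      by (intro sum.cong refl) (simp add: sqc_conv)
    also have "\<dots> = (1/2) * (\<Sum>k\<le>N. \<Sum>i\<le>k. sqc i * sqc (k - i)) + (1/2) * (\<Sum>k\<le>N. (if k = 1 then 1 else 0))"
      by (simp only: sum.distrib sum_distrib_left)
    also have "(\<Sum>k\<le>N. (if k = 1 then 1 else 0::real)) = 1"
      using Suc by (simp add: sum.delta)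
    finally have "(\<Sum>k\<le>N. sqc k) \<le> (1/2) * (\<Sum>k\<le>M. sqc k)\<^sup>2 + 1/2" using tri by simp
    moreover have "(\<Sum>k\<le>M. sqc k)\<^sup>2 \<le> 1"
      using less[of M] Suc sum_nonneg[of "{..M}" sqc] sqc_nonneg
      by (simp add: power_le_one)
    ultimately show ?thesis by simp
  qed
qed

lemma sqc_summable: "summable sqc"
proof (rule summableI_nonneg_bounded[where x=1])
  fix n show "sum sqc {..<n} \<le> 1"
  proof (cases n)
    case 0 then show ?thesis by simp
  next
    case (Suc m) then show ?thesis using sqc_partial[of m] by (simp add: lessThan_Suc_atMost)
  qed
qed (rule sqc_nonneg)

lemma sqc_suminf_le: "suminf sqc \<le> 1"
proof (rule suminf_le_const[OF sqc_summable])
  fix n show "sum sqc {..<n} \<le> 1"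
  proof (cases n)
    case 0 then show ?thesis by simp
  next
    case (Suc m) then show ?thesis using sqc_partial[of m] by (simp add: lessThan_Suc_atMost)
  qed
qed

section \<open>Cauchy product for bounded bilinear maps\<close>

lemma Cauchy_product_sums_bb:
  fixes a :: "nat \<Rightarrow> 'a::banach" and b :: "nat \<Rightarrow> 'b::banach" and prod :: "'a \<Rightarrow> 'b \<Rightarrow> 'c::banach"
  assumes bb: "bounded_bilinear prod"
    and a: "summable (\<lambda>k. norm (a k))"
    and b: "summable (\<lambda>k. norm (b k))"
  shows "(\<lambda>k. \<Sum>i\<le>k. prod (a i) (b (k - i))) sums (prod (\<Sum>k. a k) (\<Sum>k. b k))"
proof -
  obtain KK where KK: "KK > 0" "\<And>x y. norm (prod x y) \<le> norm x * norm y * KK"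
    using bounded_bilinear.pos_bounded[OF bb] by blast
  let ?S1 = "\<lambda>n::nat. {..<n} \<times> {..<n}"
  let ?S2 = "\<lambda>n::nat. {(i,j). i + j < n}"
  have S1_mono: "\<And>m n. m \<le> n \<Longrightarrow> ?S1 m \<subseteq> ?S1 n" by auto
  have S2_le_S1: "\<And>n. ?S2 n \<subseteq> ?S1 n" by auto
  have S1_le_S2: "\<And>n. ?S1 (n div 2) \<subseteq> ?S2 n" by auto
  have finite_S1: "\<And>n. finite (?S1 n)" by simp
  with S2_le_S1 have finite_S2: "\<And>n. finite (?S2 n)" by (rule finite_subset)
  let ?g = "\<lambda>(i,j). prod (a i) (b j)"
  let ?f = "\<lambda>(i,j). norm (a i) * norm (b j)"
  have f_nonneg: "\<And>x. 0 \<le> ?f x" by auto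
  then have norm_sum_f: "\<And>A. norm (sum ?f A) = sum ?f A"
    unfolding real_norm_def
    by (simp only: abs_of_nonneg sum_nonneg [rule_format])
  have sp: "prod (sum a {..<n}) (sum b {..<n}) = sum ?g (?S1 n)" for n
    by (subst bounded_bilinear.sum_left[OF bb]) (simp only: bounded_bilinear.sum_right[OF bb] sum.cartesian_product)
  have "(\<lambda>n. prod (\<Sum>k<n. a k) (\<Sum>k<n. b k)) \<longlonglongrightarrow> prod (\<Sum>k. a k) (\<Sum>k. b k)"
    by (intro bounded_bilinear.tendsto[OF bb] summable_LIMSEQ summable_norm_cancel [OF a] summable_norm_cancel [OF b])
  then have 1: "(\<lambda>n. sum ?g (?S1 n)) \<longlonglongrightarrow> prod (\<Sum>k. a k) (\<Sum>k. b k)"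
    by (simp only: sp)
  have "(\<lambda>n. (\<Sum>k<n. norm (a k)) * (\<Sum>k<n. norm (b k))) \<longlonglongrightarrow> (\<Sum>k. norm (a k)) * (\<Sum>k. norm (b k))"
    using a b by (intro tendsto_mult summable_LIMSEQ)
  then have "(\<lambda>n. sum ?f (?S1 n)) \<longlonglongrightarrow> (\<Sum>k. norm (a k)) * (\<Sum>k. norm (b k))"
    by (simp only: sum_product sum.Sigma [rule_format] finite_lessThan)
  then have "convergent (\<lambda>n. sum ?f (?S1 n))"
    by (rule convergentI)
  then have Cauchy: "Cauchy (\<lambda>n. sum ?f (?S1 n))"
    by (rule convergent_Cauchy)
  have "Zfun (\<lambda>n. sum ?f (?S1 n - ?S2 n)) sequentially"
  proof (rule ZfunI, simp only: eventually_sequentially norm_sum_f)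
    fix r :: real
    assume r: "0 < r"
    from CauchyD [OF Cauchy r] obtain N
      where "\<forall>m\<ge>N. \<forall>n\<ge>N. norm (sum ?f (?S1 m) - sum ?f (?S1 n)) < r" ..
    then have "\<And>m n. N \<le> n \<Longrightarrow> n \<le> m \<Longrightarrow> norm (sum ?f (?S1 m - ?S1 n)) < r"
      by (simp only: sum_diff finite_S1 S1_mono)
    then have N: "\<And>m n. N \<le> n \<Longrightarrow> n \<le> m \<Longrightarrow> sum ?f (?S1 m - ?S1 n) < r"
      by (simp only: norm_sum_f)
    show "\<exists>N. \<forall>n\<ge>N. sum ?f (?S1 n - ?S2 n) < r"
    proof (intro exI allI impI)
      fix n
      assume "2 * N \<le> n"
      then have n: "N \<le> n div 2" by simp
      have "sum ?f (?S1 n - ?S2 n) \<le> sum ?f (?S1 n - ?S1 (n div 2))"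
        by (intro sum_mono2 finite_Diff finite_S1 f_nonneg Diff_mono subset_refl S1_le_S2)
      also have "\<dots> < r"
        using n div_le_dividend by (rule N)
      finally show "sum ?f (?S1 n - ?S2 n) < r" .
    qed
  qed
  then have "Zfun (\<lambda>n. sum ?f (?S1 n - ?S2 n) * KK) sequentially"
    by (rule Zfun_mult_left)
  then have "Zfun (\<lambda>n. sum ?g (?S1 n - ?S2 n)) sequentially"
  proof (rule Zfun_le [rule_format])
    fix n
    have "norm (sum ?g (?S1 n - ?S2 n)) \<le> (\<Sum>x\<in>?S1 n - ?S2 n. norm (?g x))" by (rule norm_sum)
    also have "\<dots> \<le> (\<Sum>x\<in>?S1 n - ?S2 n. ?f x * KK)"
      by (rule sum_mono) (auto intro: KK(2))
    also have "\<dots> = sum ?f (?S1 n - ?S2 n) * KK" by (simp add: sum_distrib_right)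
    also have "\<dots> \<le> norm (sum ?f (?S1 n - ?S2 n) * KK)" by simp
    finally show "norm (sum ?g (?S1 n - ?S2 n)) \<le> norm (sum ?f (?S1 n - ?S2 n) * KK)" .
  qed
  then have 2: "(\<lambda>n. sum ?g (?S1 n) - sum ?g (?S2 n)) \<longlonglongrightarrow> 0"
    unfolding tendsto_Zfun_iff diff_0_right
    by (simp only: sum_diff finite_S1 S2_le_S1)
  with 1 have "(\<lambda>n. sum ?g (?S2 n)) \<longlonglongrightarrow> prod (\<Sum>k. a k) (\<Sum>k. b k)"
    by (rule Lim_transform2)
  then show ?thesis
    by (simp only: sums_def sum.triangle_reindex)
qed




section \<open>Square roots of positive operators\<close>

lemma selfadj_bop: "selfadj H \<Longrightarrow> bounded_op H" by (simp add: selfadj_def)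

lemma funpow_bop: "bounded_op f \<Longrightarrow> bounded_op (f ^^ n)"
  by (induction n) (simp_all add: bop_id[folded id_def] bop_comp')

lemma funpow_selfadj: "selfadj f \<Longrightarrow> selfadj (f ^^ n)"
proof (induction n)
  case 0 then show ?case by (simp add: selfadj_def bop_id)
next
  case (Suc n)
  have bf: "bounded_op f" using Suc.prems by (simp add: selfadj_def)
  have b: "bounded_op (f ^^ Suc n)" using funpow_bop[OF bf] .
  have "cinner ((f ^^ Suc n) x) y = cinner x ((f ^^ Suc n) y)" for x y
  proof -
    have "cinner ((f ^^ Suc n) x) y = cinner (f ((f ^^ n) x)) y" by simp
    also have "\<dots> = cinner ((f ^^ n) x) (f y)" using Suc.prems by (simp add: selfadj_def)
    also have "\<dots> = cinner x ((f ^^ n) (f y))" using Suc.IH Suc.prems by (simp add: selfadj_def)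
    also have "\<dots> = cinner x ((f ^^ Suc n) y)" by (simp add: funpow_swap1)
    finally show ?thesis .
  qed
  then show ?case using b unfolding selfadj_def by blast
qed

context
  fixes A :: "'a::complex_hilbert \<Rightarrow> 'a"
  assumes Asa: "selfadj A" and Apos: "\<And>x. 0 \<le> Re (cinner x (A x))"
begin

private definition "cc = onorm A + 1"
private definition "bb x = x - (1 / cc) *\<^sub>R A x"

private lemma bA: "bounded_op A" using Asa by (simp add: selfadj_def)

private lemma cc_pos: "cc > 0" using bop_onorm_nonneg[OF bA] by (simp add: cc_def)

private lemma bb_bop: "bounded_op bb"
  unfolding bb_def[abs_def] by (intro bop_minus_op bop_id bop_scale bA)

private lemma bb_sa: "selfadj bb"
  using bb_bop Asa unfolding selfadj_def bb_def
  by (simp add: cinner_diff_left cinner_diff_right cinner_scaleR_left cinner_scaleR_right)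

private lemma bb_num: "\<bar>Re (cinner x (bb x))\<bar> \<le> 1 * (norm x)\<^sup>2"
proof -
  have "Re (cinner x (A x)) \<le> cmod (cinner x (A x))" by (rule complex_Re_le_cmod)
  also have "\<dots> \<le> norm x * norm (A x)" by (rule cinner_Cauchy_Schwarz)
  also have "\<dots> \<le> norm x * (onorm A * norm x)" by (intro mult_left_mono bop_norm[OF bA]) simp
  also have "\<dots> \<le> cc * (norm x)\<^sup>2" by (simp add: cc_def power2_eq_square algebra_simps)
  finally have u: "Re (cinner x (A x)) / cc \<le> (norm x)\<^sup>2" using cc_pos by (simp add: field_simps)
  have l: "0 \<le> Re (cinner x (A x)) / cc" using Apos[of x] cc_pos by simp
  have "Re (cinner x (bb x)) = (norm x)\<^sup>2 - Re (cinner x (A x)) / cc"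
    by (simp add: bb_def cinner_diff_right cinner_scaleR_right Re_cinner_self)
  then show ?thesis using u l by simp
qed

private lemma bb_norm: "norm (bb x) \<le> norm x"
  using numrad[OF bb_sa invariant_UNIV bb_num] by simp

private lemma bbk_norm: "norm ((bb ^^ k) x) \<le> norm x"
  by (induction k) (auto intro: order_trans[OF bb_norm])

private lemma bbk_bop: "bounded_op (bb ^^ k)" by (rule funpow_bop[OF bb_bop])
private lemma bbk_sa: "selfadj (bb ^^ k)" by (rule funpow_selfadj[OF bb_sa])

private definition "bpw k = Blinfun (bb ^^ k)"

private lemma bpw_apply: "blinfun_apply (bpw k) = bb ^^ k"
  unfolding bpw_def using bbk_bop[of k] by (simp add: bounded_op_def bounded_linear_Blinfun_apply)

private lemma bpw_norm: "norm (bpw k) \<le> 1"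
  by (rule norm_blinfun_bound) (auto simp: bpw_apply bbk_norm)

private lemma bpw_comp: "bpw i o\<^sub>L bpw j = bpw (i + j)"
  by (rule blinfun_eqI) (simp add: bpw_apply funpow_add)

private definition "Ybl = (\<Sum>k. sqc k *\<^sub>R bpw k)"

private lemma summ_norm: "summable (\<lambda>k. norm (sqc k *\<^sub>R bpw k))"
proof (rule summable_comparison_test'[OF sqc_summable])
  fix n :: nat
  have "norm (sqc n *\<^sub>R bpw n) \<le> sqc n * 1"
    using bpw_norm[of n] sqc_nonneg[of n] by (simp add: mult_left_le)
  then show "norm (norm (sqc n *\<^sub>R bpw n)) \<le> sqc n" by simp
qed

private lemma Ybl_sq: "Ybl o\<^sub>L Ybl = 2 *\<^sub>R Ybl - bpw 1"
proof -
  have "(\<lambda>k. \<Sum>i\<le>k. (sqc i *\<^sub>R bpw i) o\<^sub>L (sqc (k - i) *\<^sub>R bpw (k - i))) sums (Ybl o\<^sub>L Ybl)"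
    unfolding Ybl_def by (rule Cauchy_product_sums_bb[OF bounded_bilinear_blinfun_compose summ_norm summ_norm])
  moreover have "(\<Sum>i\<le>k. (sqc i *\<^sub>R bpw i) o\<^sub>L (sqc (k - i) *\<^sub>R bpw (k - i)))
      = (2 * sqc k - (if k = 1 then 1 else 0)) *\<^sub>R bpw k" for k
  proof -
    have "(\<Sum>i\<le>k. (sqc i *\<^sub>R bpw i) o\<^sub>L (sqc (k - i) *\<^sub>R bpw (k - i)))
        = (\<Sum>i\<le>k. (sqc i * sqc (k - i)) *\<^sub>R bpw k)"
      by (intro sum.cong refl)
         (simp add: bounded_bilinear.scaleR_left[OF bounded_bilinear_blinfun_compose]
           bounded_bilinear.scaleR_right[OF bounded_bilinear_blinfun_compose] bpw_comp)
    also have "\<dots> = (\<Sum>i\<le>k. sqc i * sqc (k - i)) *\<^sub>R bpw k" by (simp add: scaleR_sum_left)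
    finally show ?thesis by (simp add: sqc_conv)
  qed
  ultimately have s1: "(\<lambda>k. (2 * sqc k - (if k = 1 then 1 else 0)) *\<^sub>R bpw k) sums (Ybl o\<^sub>L Ybl)"
    by simp
  have "(\<lambda>k. sqc k *\<^sub>R bpw k) sums Ybl"
    unfolding Ybl_def by (rule summable_sums[OF summable_norm_cancel[OF summ_norm]])
  then have s2: "(\<lambda>k. 2 *\<^sub>R (sqc k *\<^sub>R bpw k)) sums (2 *\<^sub>R Ybl)"
    by (rule bounded_linear.sums[OF bounded_linear_scaleR_right])
  have s3: "(\<lambda>k. if k = 1 then bpw k else 0) sums bpw 1" by (rule sums_single)
  have "(\<lambda>k. 2 *\<^sub>R (sqc k *\<^sub>R bpw k) - (if k = 1 then bpw k else 0)) sums (2 *\<^sub>R Ybl - bpw 1)"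
    by (rule sums_diff[OF s2 s3])
  moreover have "(\<lambda>k. 2 *\<^sub>R (sqc k *\<^sub>R bpw k) - (if k = 1 then bpw k else 0))
      = (\<lambda>k. (2 * sqc k - (if k = 1 then 1 else 0)) *\<^sub>R bpw k)"
    by (rule ext) (simp add: scaleR_diff_left)
  ultimately have "(\<lambda>k. (2 * sqc k - (if k = 1 then 1 else 0)) *\<^sub>R bpw k) sums (2 *\<^sub>R Ybl - bpw 1)"
    by simp
  then show ?thesis by (rule sums_unique2[OF s1])
qed

private definition "Yf x = (\<Sum>k. sqc k *\<^sub>R (bb ^^ k) x)"

private lemma Yf_summable: "summable (\<lambda>k. sqc k *\<^sub>R (bb ^^ k) x)"
proof (rule summable_comparison_test'[OF summable_mult2[OF sqc_summable, of "norm x"]])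
  fix n :: nat
  show "norm (sqc n *\<^sub>R (bb ^^ n) x) \<le> sqc n * norm x"
    using bbk_norm[of n x] sqc_nonneg[of n] by (simp add: mult_left_mono)
qed

private lemma Ybl_apply: "blinfun_apply Ybl x = Yf x"
proof -
  have "blinfun_apply Ybl x = (\<Sum>k. blinfun_apply (sqc k *\<^sub>R bpw k) x)"
    unfolding Ybl_def
    by (rule bounded_linear.suminf[OF blinfun.bounded_linear_left summable_norm_cancel[OF summ_norm]])
  then show ?thesis by (simp add: Yf_def bpw_apply blinfun.scaleR_left)
qed

private lemma Yf_lin: "bounded_linear Yf"
proof -
  have "bounded_linear (blinfun_apply Ybl)" by (rule blinfun.bounded_linear_right)
  moreover have "blinfun_apply Ybl = Yf" using Ybl_apply by auto
  ultimately show ?thesis by simp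
qed

private lemma Yf_sq: "Yf (Yf x) = 2 *\<^sub>R Yf x - bb x"
proof -
  have "blinfun_apply (Ybl o\<^sub>L Ybl) x = blinfun_apply (2 *\<^sub>R Ybl - bpw 1) x" by (simp only: Ybl_sq)
  then show ?thesis by (simp add: Ybl_apply blinfun.diff_left bpw_apply blinfun.scaleR_left)
qed

private lemma Yf_C: "Yf (a *\<^sub>C x) = a *\<^sub>C Yf x"
proof -
  have "Yf (a *\<^sub>C x) = (\<Sum>k. a *\<^sub>C (sqc k *\<^sub>R (bb ^^ k) x))"
    unfolding Yf_def by (intro suminf_cong) (simp add: bop_C[OF bbk_bop] scaleC_scaleR)
  also have "\<dots> = a *\<^sub>C Yf x"
    unfolding Yf_def by (rule bounded_linear.suminf[OF bounded_linear_scaleC Yf_summable, symmetric])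
  finally show ?thesis .
qed

private lemma Yf_commute:
  assumes Q: "bounded_op Q" and QA: "\<And>x. Q (A x) = A (Q x)"
  shows "Q (Yf x) = Yf (Q x)"
proof -
  have Qb: "Q (bb y) = bb (Q y)" for y by (simp add: bb_def bop_diff[OF Q] bop_scaleR[OF Q] QA)
  have Qbk: "Q ((bb ^^ k) y) = (bb ^^ k) (Q y)" for k y by (induction k) (simp_all add: Qb)
  have "Q (Yf x) = (\<Sum>k. Q (sqc k *\<^sub>R (bb ^^ k) x))"
    unfolding Yf_def by (rule bounded_linear.suminf[OF bop_lin[OF Q] Yf_summable])
  also have "\<dots> = Yf (Q x)" unfolding Yf_def by (intro suminf_cong) (simp add: bop_scaleR[OF Q] Qbk)
  finally show ?thesis .
qed

private lemma Yf_form: "cinner x (Yf x) = of_real (\<Sum>k. sqc k * Re (cinner x ((bb ^^ k) x)))"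
proof -
  have s: "summable (\<lambda>k. sqc k * Re (cinner x ((bb ^^ k) x)))"
  proof (rule summable_comparison_test'[OF summable_mult2[OF sqc_summable, of "(norm x)\<^sup>2"]])
    fix n :: nat
    have "\<bar>Re (cinner x ((bb ^^ n) x))\<bar> \<le> (norm x)\<^sup>2"
    proof -
      have "\<bar>Re (cinner x ((bb ^^ n) x))\<bar> \<le> cmod (cinner x ((bb ^^ n) x))" by (rule abs_Re_le_cmod)
      also have "\<dots> \<le> norm x * norm ((bb ^^ n) x)" by (rule cinner_Cauchy_Schwarz)
      also have "\<dots> \<le> norm x * norm x" by (intro mult_left_mono bbk_norm) simp
      finally show ?thesis by (simp add: power2_eq_square)
    qed
    then show "norm (sqc n * Re (cinner x ((bb ^^ n) x))) \<le> sqc n * (norm x)\<^sup>2"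
      using sqc_nonneg[of n] by (simp add: abs_mult mult_left_mono)
  qed
  have "cinner x (Yf x) = (\<Sum>k. cinner x (sqc k *\<^sub>R (bb ^^ k) x))"
    unfolding Yf_def by (rule bounded_linear.suminf[OF bounded_linear_cinner_right Yf_summable])
  also have "\<dots> = (\<Sum>k. of_real (sqc k * Re (cinner x ((bb ^^ k) x))))"
    by (intro suminf_cong) (metis selfadj_real[OF bbk_sa] cinner_scaleR_right of_real_mult)
  also have "\<dots> = of_real (\<Sum>k. sqc k * Re (cinner x ((bb ^^ k) x)))"
    by (rule suminf_of_real[OF s, symmetric])
  finally show ?thesis .
qed

private lemma Yf_le: "(\<Sum>k. sqc k * Re (cinner x ((bb ^^ k) x))) \<le> (norm x)\<^sup>2"
proof -
  have s: "summable (\<lambda>k. sqc k * Re (cinner x ((bb ^^ k) x)))" and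
    le: "\<And>k. sqc k * Re (cinner x ((bb ^^ k) x)) \<le> sqc k * (norm x)\<^sup>2"
  proof -
    have b: "Re (cinner x ((bb ^^ n) x)) \<le> (norm x)\<^sup>2" for n
    proof -
      have "Re (cinner x ((bb ^^ n) x)) \<le> cmod (cinner x ((bb ^^ n) x))" by (rule complex_Re_le_cmod)
      also have "\<dots> \<le> norm x * norm ((bb ^^ n) x)" by (rule cinner_Cauchy_Schwarz)
      also have "\<dots> \<le> norm x * norm x" by (intro mult_left_mono bbk_norm) simp
      finally show ?thesis by (simp add: power2_eq_square)
    qed
    show "sqc k * Re (cinner x ((bb ^^ k) x)) \<le> sqc k * (norm x)\<^sup>2" for k
      using b sqc_nonneg by (intro mult_left_mono) auto
    have "\<bar>Re (cinner x ((bb ^^ n) x))\<bar> \<le> (norm x)\<^sup>2" for n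
    proof -
      have "\<bar>Re (cinner x ((bb ^^ n) x))\<bar> \<le> cmod (cinner x ((bb ^^ n) x))" by (rule abs_Re_le_cmod)
      also have "\<dots> \<le> norm x * norm ((bb ^^ n) x)" by (rule cinner_Cauchy_Schwarz)
      also have "\<dots> \<le> norm x * norm x" by (intro mult_left_mono bbk_norm) simp
      finally show ?thesis by (simp add: power2_eq_square)
    qed
    then show "summable (\<lambda>k. sqc k * Re (cinner x ((bb ^^ k) x)))"
      using sqc_nonneg
      by (intro summable_comparison_test'[OF summable_mult2[OF sqc_summable, of "(norm x)\<^sup>2"]])
         (simp add: abs_mult mult_left_mono)
  qed
  have "(\<Sum>k. sqc k * Re (cinner x ((bb ^^ k) x))) \<le> (\<Sum>k. sqc k * (norm x)\<^sup>2)"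
    by (rule suminf_le[OF le s summable_mult2[OF sqc_summable]])
  also have "\<dots> = suminf sqc * (norm x)\<^sup>2" by (rule suminf_mult2[OF sqc_summable, symmetric])
  also have "\<dots> \<le> 1 * (norm x)\<^sup>2" by (intro mult_right_mono sqc_suminf_le) simp
  finally show ?thesis by simp
qed

private definition "Rf x = sqrt cc *\<^sub>R (x - Yf x)"

private lemma Rf_bop: "bounded_op Rf"
proof -
  have "bounded_linear Rf" unfolding Rf_def[abs_def]
    by (intro bounded_linear_compose[OF bounded_linear_scaleR_right, of "\<lambda>x. x - Yf x", simplified o_def]
        bounded_linear_sub bounded_linear_ident Yf_lin)
  then show ?thesis unfolding bounded_op_def
    by (simp add: Rf_def Yf_C scaleC_scaleR scaleC_diff_right)
qed

private lemma Rf_pos: "positive_op Rf"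
proof -
  have "cinner x (Rf x) = of_real (sqrt cc * ((norm x)\<^sup>2 - (\<Sum>k. sqc k * Re (cinner x ((bb ^^ k) x)))))" for x
    by (simp add: Rf_def cinner_scaleR_right cinner_diff_right cinner_self Yf_form algebra_simps)
  then show ?thesis unfolding positive_op_def using Rf_bop Yf_le cc_pos by simp
qed

private lemma Rf_sq: "Rf (Rf x) = A x"
proof -
  have lin: "Yf (u - v) = Yf u - Yf v" "Yf (r *\<^sub>R u) = r *\<^sub>R Yf u" for u v r
    using Yf_lin by (simp_all add: linear_simps)
  have "Rf (Rf x) = cc *\<^sub>R (x - Yf x - (Yf x - Yf (Yf x)))"
    using cc_pos by (simp add: Rf_def lin scaleR_diff_right[symmetric])
  also have "x - Yf x - (Yf x - Yf (Yf x)) = x - bb x" by (simp add: Yf_sq scaleR_2 algebra_simps)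
  also have "cc *\<^sub>R (x - bb x) = A x" using cc_pos by (simp add: bb_def)
  finally show ?thesis .
qed

private lemma Rf_commute:
  assumes Q: "bounded_op Q" and QA: "\<And>x. Q (A x) = A (Q x)"
  shows "Q (Rf x) = Rf (Q x)"
  unfolding Rf_def by (simp only: bop_scaleR[OF Q] bop_diff[OF Q] Yf_commute[OF Q QA])

lemma sqrt_exists:
  "\<exists>R. positive_op R \<and> (\<forall>x. R (R x) = A x) \<and>
     (\<forall>Q. bounded_op Q \<and> (\<forall>x. Q (A x) = A (Q x)) \<longrightarrow> (\<forall>x. Q (R x) = R (Q x)))"
  using Rf_pos Rf_sq Rf_commute by blast

end




section \<open>The absolute value\<close>

lemma TT_selfadj:
  assumes T: "bounded_op T"
  shows "selfadj (\<lambda>x. adj T (T x))"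
proof -
  have "cinner (adj T (T x)) y = cinner x (adj T (T y))" for x y
    using adj_prop2[OF T, of "T x" y] adj_prop[OF T, of x "T y"] by simp
  then show ?thesis unfolding selfadj_def using bop_comp[OF bop_adj[OF T] T] by blast
qed

lemma TT_pos: "bounded_op T \<Longrightarrow> 0 \<le> Re (cinner x (adj T (T x)))"
  using adj_prop[of T x "T x", symmetric] by (simp add: Re_cinner_self)

lemma sqrt_unique:
  assumes Asa: "selfadj A" and Apos: "\<And>x. 0 \<le> Re (cinner x (A x))"
    and R: "positive_op R" "\<And>x. R (R x) = A x"
    and Rc: "\<And>Q. bounded_op Q \<Longrightarrow> (\<forall>x. Q (A x) = A (Q x)) \<Longrightarrow> (\<forall>x. Q (R x) = R (Q x))"
    and Q: "positive_op Q" "\<And>x. Q (Q x) = A x"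
  shows "Q = R"
proof
  fix x
  have Rs: "selfadj R" by (rule positive_selfadj[OF R(1)])
  have Qs: "selfadj Q" by (rule positive_selfadj[OF Q(1)])
  have bR: "bounded_op R" and bQ: "bounded_op Q" using Rs Qs by (auto simp: selfadj_def)
  have QA: "\<forall>x. Q (A x) = A (Q x)" by (simp flip: Q(2))
  have QR: "Q (R z) = R (Q z)" for z using Rc[OF bQ QA] by blast
  define y where "y = R x - Q x"
  have sum0: "R y + Q y = 0"
    by (simp add: y_def bop_diff[OF bR] bop_diff[OF bQ] R(2) Q(2) QR)
  have pR: "0 \<le> Re (cinner v (R v))" and pQ: "0 \<le> Re (cinner v (Q v))" for v
    using R(1) Q(1) by (auto simp: positive_op_def)
  have "Re (cinner y (R y)) + Re (cinner y (Q y)) = 0"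
    using arg_cong[OF sum0, of "\<lambda>z. Re (cinner y z)"] by (simp add: cinner_add_right)
  then have e1: "Re (cinner y (R y)) = 0" and e2: "Re (cinner y (Q y)) = 0"
    using pR[of y] pQ[of y] by linarith+
  have "(norm (R y))\<^sup>2 \<le> 0"
    using posCS[OF Rs invariant_UNIV pR, of y] e1 by simp
  then have Ry: "R y = 0" by simp
  have "(norm (Q y))\<^sup>2 \<le> 0"
    using posCS[OF Qs invariant_UNIV pQ, of y] e2 by simp
  then have Qy: "Q y = 0" by simp
  have "cinner y y = cinner y (R x) - cinner y (Q x)" by (subst (2) y_def) (simp add: cinner_diff_right)
  also have "\<dots> = cinner (R y) x - cinner (Q y) x"
    using Rs Qs by (simp add: selfadj_def)
  also have "\<dots> = 0" by (simp add: Ry Qy)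
  finally have "y = 0" using cinner_self_eq_zero by blast
  then show "Q x = R x" by (simp add: y_def)
qed

lemma op_abs_props:
  assumes T: "bounded_op T"
  shows "positive_op (op_abs T) \<and> op_abs T \<circ> op_abs T = adj T \<circ> T"
proof -
  let ?A = "\<lambda>x. adj T (T x)"
  obtain R where R: "positive_op R" "\<And>x. R (R x) = ?A x"
    and Rc: "\<And>Q. bounded_op Q \<Longrightarrow> (\<forall>x. Q (?A x) = ?A (Q x)) \<Longrightarrow> (\<forall>x. Q (R x) = R (Q x))"
    using sqrt_exists[OF TT_selfadj[OF T] TT_pos[OF T]] by blast
  have ex: "positive_op R \<and> R \<circ> R = adj T \<circ> T" using R by (auto simp: o_def)
  have un: "Q = R" if "positive_op Q \<and> Q \<circ> Q = adj T \<circ> T" for Q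
  proof (rule sqrt_unique[OF TT_selfadj[OF T] TT_pos[OF T] R Rc])
    show "positive_op Q" using that by blast
    show "Q (Q x) = adj T (T x)" for x using that by (metis comp_apply)
  qed blast
  have "op_abs T = R" unfolding op_abs_def by (rule the_equality) (use ex un in blast)+
  then show ?thesis using ex by simp
qed

lemma op_abs_pos: "bounded_op T \<Longrightarrow> positive_op (op_abs T)"
  using op_abs_props by blast

lemma op_abs_sq: "bounded_op T \<Longrightarrow> op_abs T (op_abs T x) = adj T (T x)"
  using op_abs_props[of T] by (metis comp_apply)

lemma op_abs_sa: "bounded_op T \<Longrightarrow> selfadj (op_abs T)"
  by (rule positive_selfadj[OF op_abs_pos])

lemma op_abs_inner: "bounded_op T \<Longrightarrow> cinner (op_abs T x) (op_abs T y) = cinner (T x) (T y)"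
proof -
  assume T: "bounded_op T"
  have "cinner (op_abs T x) (op_abs T y) = cinner x (op_abs T (op_abs T y))"
    using op_abs_sa[OF T] by (simp add: selfadj_def)
  also have "\<dots> = cinner (T x) (T y)" by (simp add: op_abs_sq[OF T] adj_prop[OF T])
  finally show ?thesis .
qed

lemma op_abs_norm: "bounded_op T \<Longrightarrow> norm (op_abs T x) = norm (T x)"
proof -
  assume T: "bounded_op T"
  have "(norm (op_abs T x))\<^sup>2 = (norm (T x))\<^sup>2"
    using arg_cong[OF op_abs_inner[OF T, of x x], of Re] by (simp only: Re_cinner_self)
  then show ?thesis by (metis norm_ge_zero power2_eq_iff_nonneg)
qed




section \<open>The polar factor\<close>

lemma seq_in_closure:
  assumes "u \<in> closure (range (f :: 'a::complex_hilbert \<Rightarrow> 'a))"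
  obtains a where "(\<lambda>n. f (a n)) \<longlonglongrightarrow> u"
proof -
  obtain s where s: "\<forall>n. s n \<in> range f" "s \<longlonglongrightarrow> u" using assms closure_sequential by blast
  then have "\<forall>n. \<exists>y. s n = f y" by blast
  then obtain a where "\<forall>n. s n = f (a n)" by metis
  then have "s = (\<lambda>n. f (a n))" by auto
  then show ?thesis using that s(2) by blast
qed

lemma bop_cont: "bounded_op f \<Longrightarrow> continuous_on S f"
  by (intro linear_continuous_on bop_lin)

lemma bop_tendsto: "bounded_op f \<Longrightarrow> (s \<longlonglongrightarrow> u) \<Longrightarrow> ((\<lambda>n. f (s n)) \<longlonglongrightarrow> f u)"
  by (rule bounded_linear.tendsto[OF bop_lin])

context
  fixes T :: "'a::complex_hilbert \<Rightarrow> 'a"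
  assumes T: "bounded_op T"
begin

private abbreviation "A \<equiv> op_abs T"
private definition "L = closure (range A)"

private lemma Asa8: "selfadj A" by (rule op_abs_sa[OF T])
private lemma bA8: "bounded_op A" using Asa8 by (simp add: selfadj_def)

private lemma L_cl: "closed L" by (simp add: L_def)

private lemma AL: "A y \<in> L" by (simp add: L_def closure_subset[THEN subsetD])

private lemma L_add: "u \<in> L \<Longrightarrow> v \<in> L \<Longrightarrow> u + v \<in> L"
proof -
  assume "u \<in> L" "v \<in> L"
  then obtain a b where a: "(\<lambda>n. A (a n)) \<longlonglongrightarrow> u" and b: "(\<lambda>n. A (b n)) \<longlonglongrightarrow> v"
    unfolding L_def by (metis seq_in_closure)
  have "(\<lambda>n. A (a n + b n)) \<longlonglongrightarrow> u + v" using tendsto_add[OF a b] by (simp add: bop_add[OF bA8])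
  then show "u + v \<in> L" unfolding L_def closure_sequential
    by (intro exI[where x="\<lambda>n. A (a n + b n)"]) simp
qed

private lemma L_scale: "u \<in> L \<Longrightarrow> c *\<^sub>C u \<in> L"
proof -
  assume "u \<in> L"
  then obtain a where a: "(\<lambda>n. A (a n)) \<longlonglongrightarrow> u" unfolding L_def by (metis seq_in_closure)
  have "(\<lambda>n. A (c *\<^sub>C a n)) \<longlonglongrightarrow> c *\<^sub>C u"
    using bounded_linear.tendsto[OF bounded_linear_scaleC a, of c] by (simp add: bop_C[OF bA8])
  then show "c *\<^sub>C u \<in> L" unfolding L_def closure_sequential
    by (intro exI[where x="\<lambda>n. A (c *\<^sub>C a n)"]) simp
qed

private lemma L_sub: "csubspace L"
  unfolding csubspace_def using L_add L_scale AL[of 0] bop_zero[OF bA8] by auto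

private definition "P x = (SOME p. p \<in> L \<and> (\<forall>k\<in>L. cinner k (x - p) = 0))"

private lemma P_prop: "P x \<in> L \<and> (\<forall>k\<in>L. cinner k (x - P x) = 0)"
  unfolding P_def by (rule someI_ex) (use projection_exists[OF L_sub L_cl] in blast)

private lemma P_uniq:
  assumes "p \<in> L" "\<forall>k\<in>L. cinner k (x - p) = 0"
  shows "P x = p"
proof -
  have PL: "P x \<in> L" using P_prop[of x] by (rule conjunct1)
  have d: "P x - p \<in> L" by (rule csubspace_diff[OF L_sub PL assms(1)])
  have h1: "cinner (P x - p) (x - p) = 0" using assms(2) d by blast
  have h2: "cinner (P x - p) (x - P x) = 0" using d P_prop[of x] by simp
  note h = h1 h2
  have e: "(x - p) - (x - P x) = P x - p" by (simp add: algebra_simps)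
  have "cinner (P x - p) (P x - p) = cinner (P x - p) ((x - p) - (x - P x))" by (simp only: e)
  also have "\<dots> = cinner (P x - p) (x - p) - cinner (P x - p) (x - P x)" by (rule cinner_diff_right)
  also have "\<dots> = 0" using h by simp
  finally have "cinner (P x - p) (P x - p) = 0" .
  then have "P x - p = 0" by (simp only: cinner_self_eq_zero)
  then show ?thesis by simp
qed

private lemma P_L: "P x \<in> L" using P_prop by blast
private lemma P_orth: "k \<in> L \<Longrightarrow> cinner k (x - P x) = 0" using P_prop by blast

private lemma P_id: "u \<in> L \<Longrightarrow> P u = u"
  by (rule P_uniq) simp_all

private lemma P_add: "P (x + y) = P x + P y"
proof (rule P_uniq)
  show "P x + P y \<in> L" by (intro csubspace_add[OF L_sub] P_L)
  have e: "x + y - (P x + P y) = (x - P x) + (y - P y)" by simp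
  show "\<forall>k\<in>L. cinner k (x + y - (P x + P y)) = 0"
    unfolding e by (simp add: cinner_add_right P_orth)
qed

private lemma P_C: "P (c *\<^sub>C x) = c *\<^sub>C P x"
proof (rule P_uniq)
  show "c *\<^sub>C P x \<in> L" by (intro csubspace_scaleC[OF L_sub] P_L)
  have e: "c *\<^sub>C x - c *\<^sub>C P x = c *\<^sub>C (x - P x)" by (simp add: scaleC_diff_right)
  show "\<forall>k\<in>L. cinner k (c *\<^sub>C x - c *\<^sub>C P x) = 0"
    unfolding e by (simp add: cinner_scaleC_right P_orth)
qed

private lemma P_diff: "P (x - y) = P x - P y"
  using P_add[of "x - y" y] by simp

private lemma P_sym: "cinner (P x) y = cinner (P x) (P y)"
proof -
  have "cinner (P x) (y - P y) = 0" by (rule P_orth[OF P_L])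
  then show ?thesis by (simp add: cinner_diff_right)
qed

private lemma P_sym2: "cinner x (P y) = cinner (P x) (P y)"
proof -
  have "cinner (P y) (x - P x) = 0" by (rule P_orth[OF P_L])
  then have "cinner (x - P x) (P y) = 0" by (subst cinner_cnj) simp
  then show ?thesis by (simp add: cinner_diff_left)
qed

private lemma P_norm: "norm (P x) \<le> norm x"
proof -
  have o: "cinner (P x) (x - P x) = 0" by (rule P_orth[OF P_L])
  have o2: "Re (cinner (x - P x) (P x)) = 0" by (subst cinner_cnj) (simp only: o complex_cnj_zero zero_complex.sel)
  have "(norm ((x - P x) + P x))\<^sup>2 = (norm (x - P x))\<^sup>2 + 2 * Re (cinner (x - P x) (P x)) + (norm (P x))\<^sup>2"
    by (rule norm_add_sq)
  then have "(norm x)\<^sup>2 = (norm (x - P x))\<^sup>2 + (norm (P x))\<^sup>2" by (simp only: o2 diff_add_cancel)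
  then have "(norm (P x))\<^sup>2 \<le> (norm x)\<^sup>2" by simp
  then show ?thesis by (rule power2_le_imp_le) simp
qed

private definition "f0 u = T (SOME y. A y = u)"

private lemma f0_A: "f0 (A y) = T y"
proof -
  define y' where "y' = (SOME y'. A y' = A y)"
  have "A y' = A y" unfolding y'_def by (rule someI) (rule refl)
  then have "A (y' - y) = 0" by (simp add: bop_diff[OF bA8])
  then have "norm (T (y' - y)) = 0" using op_abs_norm[OF T, of "y' - y"] by simp
  then have "T y' = T y" by (simp add: bop_diff[OF T])
  then show ?thesis by (simp add: f0_def y'_def)
qed

private lemma f0_uc: "uniformly_continuous_on (range A) f0"
  unfolding uniformly_continuous_on_def
proof (intro allI impI)
  fix e :: real assume e: "e > 0"
  show "\<exists>d>0. \<forall>x\<in>range A. \<forall>x'\<in>range A. dist x' x < d \<longrightarrow> dist (f0 x') (f0 x) < e"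
  proof (intro exI[of _ e] conjI ballI impI e)
    fix u v assume "u \<in> range A" "v \<in> range A" "dist v u < e"
    then obtain a b where ab: "u = A a" "v = A b" by blast
    have "dist (f0 v) (f0 u) = norm (T b - T a)" by (simp add: ab f0_A dist_norm)
    also have "\<dots> = norm (A b - A a)"
      using op_abs_norm[OF T, of "b - a"] by (simp add: bop_diff[OF T] bop_diff[OF bA8])
    also have "\<dots> < e" using \<open>dist v u < e\<close> by (simp add: ab dist_norm)
    finally show "dist (f0 v) (f0 u) < e" .
  qed
qed

private definition "g = (SOME g. uniformly_continuous_on (closure (range A)) g \<and> (\<forall>x\<in>range A. f0 x = g x))"

private lemma g_prop: "uniformly_continuous_on L g \<and> (\<forall>x\<in>range A. f0 x = g x)"
proof -
  obtain h where "uniformly_continuous_on (closure (range A)) h" "\<And>x. x \<in> range A \<Longrightarrow> f0 x = h x"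
    using uniformly_continuous_on_extension_on_closure[OF f0_uc] by metis
  then have "\<exists>h. uniformly_continuous_on (closure (range A)) h \<and> (\<forall>x\<in>range A. f0 x = h x)" by blast
  then show ?thesis unfolding g_def L_def by (rule someI_ex)
qed

private lemma g_A: "g (A y) = T y" using g_prop f0_A[of y] rangeI[of A y] by simp

private lemma g_cont: "continuous_on L g"
  using g_prop uniformly_continuous_imp_continuous by blast

private lemma g_lim:
  assumes "(\<lambda>n. A (a n)) \<longlonglongrightarrow> u"
  shows "(\<lambda>n. T (a n)) \<longlonglongrightarrow> g u"
proof -
  have u: "u \<in> L" unfolding L_def closure_sequential using assms by (intro exI[of _ "\<lambda>n. A (a n)"]) simp
  have "((\<lambda>n. g (A (a n))) \<longlonglongrightarrow> g u)"
    by (rule continuous_on_tendsto_compose[OF g_cont assms u]) (simp add: AL)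
  then show ?thesis by (simp add: g_A)
qed

private lemma g_add: "u \<in> L \<Longrightarrow> v \<in> L \<Longrightarrow> g (u + v) = g u + g v"
proof -
  assume "u \<in> L" "v \<in> L"
  then obtain a b where a: "(\<lambda>n. A (a n)) \<longlonglongrightarrow> u" and b: "(\<lambda>n. A (b n)) \<longlonglongrightarrow> v"
    unfolding L_def by (metis seq_in_closure)
  have "(\<lambda>n. A (a n + b n)) \<longlonglongrightarrow> u + v" using tendsto_add[OF a b] by (simp add: bop_add[OF bA8])
  then have 1: "(\<lambda>n. T (a n + b n)) \<longlonglongrightarrow> g (u + v)" by (rule g_lim)
  have 2: "(\<lambda>n. T (a n + b n)) \<longlonglongrightarrow> g u + g v"
    using tendsto_add[OF g_lim[OF a] g_lim[OF b]] by (simp add: bop_add[OF T])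
  show ?thesis using LIMSEQ_unique[OF 1 2] .
qed

private lemma g_C: "u \<in> L \<Longrightarrow> g (c *\<^sub>C u) = c *\<^sub>C g u"
proof -
  assume "u \<in> L"
  then obtain a where a: "(\<lambda>n. A (a n)) \<longlonglongrightarrow> u" unfolding L_def by (metis seq_in_closure)
  have "(\<lambda>n. A (c *\<^sub>C a n)) \<longlonglongrightarrow> c *\<^sub>C u"
    using bounded_linear.tendsto[OF bounded_linear_scaleC a, of c] by (simp add: bop_C[OF bA8])
  then have 1: "(\<lambda>n. T (c *\<^sub>C a n)) \<longlonglongrightarrow> g (c *\<^sub>C u)" by (rule g_lim)
  have 2: "(\<lambda>n. T (c *\<^sub>C a n)) \<longlonglongrightarrow> c *\<^sub>C g u"
    using bounded_linear.tendsto[OF bounded_linear_scaleC g_lim[OF a], of c] by (simp add: bop_C[OF T])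
  show ?thesis using LIMSEQ_unique[OF 1 2] .
qed

private lemma g_inner: "u \<in> L \<Longrightarrow> v \<in> L \<Longrightarrow> cinner (g u) (g v) = cinner u v"
proof -
  assume "u \<in> L" "v \<in> L"
  then obtain a b where a: "(\<lambda>n. A (a n)) \<longlonglongrightarrow> u" and b: "(\<lambda>n. A (b n)) \<longlonglongrightarrow> v"
    unfolding L_def by (metis seq_in_closure)
  have 1: "(\<lambda>n. cinner (T (a n)) (T (b n))) \<longlonglongrightarrow> cinner (g u) (g v)"
    by (intro tendsto_cinner g_lim a b)
  have 2: "(\<lambda>n. cinner (T (a n)) (T (b n))) \<longlonglongrightarrow> cinner u v"
    using tendsto_cinner[OF a b] by (simp add: op_abs_inner[OF T])
  show ?thesis using LIMSEQ_unique[OF 1 2] .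
qed

private definition "Vf x = g (P x)"

private lemma Vf_A: "Vf (A y) = T y" by (simp add: Vf_def P_id[OF AL] g_A)

private lemma Vf_inner: "cinner (Vf x) (Vf y) = cinner (P x) (P y)"
  by (simp add: Vf_def g_inner P_L)

private lemma Vf_norm: "norm (Vf x) = norm (P x)"
proof -
  have "(norm (Vf x))\<^sup>2 = (norm (P x))\<^sup>2"
    using arg_cong[OF Vf_inner[of x x], of Re] by (simp only: Re_cinner_self)
  then show ?thesis by (metis norm_ge_zero power2_eq_iff_nonneg)
qed

private lemma Vf_bop: "bounded_op Vf"
proof -
  have add: "Vf (x + y) = Vf x + Vf y" for x y by (simp add: Vf_def P_add g_add P_L)
  have sc: "Vf (c *\<^sub>C x) = c *\<^sub>C Vf x" for c x by (simp add: Vf_def P_C g_C P_L)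
  have "bounded_linear Vf"
  proof (rule bounded_linear_intro[OF add])
    show "Vf (r *\<^sub>R x) = r *\<^sub>R Vf x" for r x by (metis sc scaleC_of_real)
    show "norm (Vf x) \<le> norm x * 1" for x by (simp add: Vf_norm P_norm)
  qed
  then show ?thesis using sc by (simp add: bounded_op_def)
qed

private lemma perp_iff: "(\<forall>k\<in>L. cinner k x = 0) \<longleftrightarrow> T x = 0"
proof
  assume h: "\<forall>k\<in>L. cinner k x = 0"
  have "cinner (A (A x)) x = 0" using h AL by blast
  then have "cinner (A x) (A x) = 0" using Asa8 by (simp add: selfadj_def)
  then have "A x = 0" by (simp only: cinner_self_eq_zero)
  then show "T x = 0" using op_abs_norm[OF T, of x] by simp
next
  assume "T x = 0"
  then have Ax: "A x = 0" using op_abs_norm[OF T, of x] by simp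
  have "range A \<subseteq> {k. cinner k x = 0}"
  proof
    fix k assume "k \<in> range A"
    then obtain y where "k = A y" by blast
    then have "cinner k x = cinner y (A x)" using Asa8 by (simp add: selfadj_def)
    then show "k \<in> {k. cinner k x = 0}" using Ax by simp
  qed
  moreover have "closed {k. cinner k x = 0}"
    by (intro closed_Collect_eq continuous_on_const linear_continuous_on bounded_linear_cinner_left)
  ultimately have "L \<subseteq> {k. cinner k x = 0}" unfolding L_def by (rule closure_minimal)
  then show "\<forall>k\<in>L. cinner k x = 0" by blast
qed

private lemma Px0_iff: "P x = 0 \<longleftrightarrow> (\<forall>k\<in>L. cinner k x = 0)"
proof
  assume "P x = 0" then show "\<forall>k\<in>L. cinner k x = 0" using P_orth[of _ x] by simp
next
  assume h: "\<forall>k\<in>L. cinner k x = 0"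
  have "cinner (P x) (x - P x) = 0" by (rule P_orth[OF P_L])
  moreover have "cinner (P x) x = 0" using h P_L by blast
  ultimately have "cinner (P x) (P x) = 0" by (simp add: cinner_diff_right)
  then show "P x = 0" by (simp only: cinner_self_eq_zero)
qed

private lemma Vf_ker: "Vf x = 0 \<longleftrightarrow> T x = 0"
proof -
  have "Vf x = 0 \<longleftrightarrow> P x = 0" using Vf_norm[of x] by (metis norm_eq_zero)
  then show ?thesis using Px0_iff perp_iff by simp
qed

private lemma Vf_adj: "adj Vf (Vf x) = P x"
proof (rule cinner_ext)
  fix z
  have "cinner z (adj Vf (Vf x)) = cinner (Vf z) (Vf x)" by (simp add: adj_prop[OF Vf_bop])
  also have "\<dots> = cinner (P z) (P x)" by (rule Vf_inner)
  also have "\<dots> = cinner z (P x)" by (rule P_sym2[symmetric])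
  finally show "cinner z (adj Vf (Vf x)) = cinner z (P x)" .
qed

private lemma Vf_pi: "partial_isometry Vf"
  unfolding partial_isometry_def
proof (intro conjI Vf_bop ext)
  fix x show "(Vf \<circ> adj Vf \<circ> Vf) x = Vf x" by (simp only: comp_apply Vf_adj) (simp add: Vf_def P_id[OF P_L])
qed

private lemma Vf_factor: "T = Vf \<circ> A"
  by (rule ext) (simp add: Vf_A)

private lemma Vf_kerset: "op_ker Vf = op_ker T"
  by (simp add: op_ker_def Vf_ker)

private lemma Vf_unique:
  assumes W: "partial_isometry W" "T = W \<circ> A" "op_ker W = op_ker T"
  shows "W = Vf"
proof
  fix x
  have bW: "bounded_op W" using W(1) by (simp add: partial_isometry_def)
  have kerW: "W z = 0 \<longleftrightarrow> T z = 0" for z using W(3) by (auto simp: op_ker_def set_eq_iff)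
  have WA: "W (A y) = T y" for y using W(2) by (metis comp_apply)
  have "T (x - P x) = 0" using perp_iff P_orth by blast
  then have e1: "W x = W (P x)" and e2: "Vf x = Vf (P x)"
    using kerW[of "x - P x"] Vf_ker[of "x - P x"] by (simp_all add: bop_diff[OF bW] bop_diff[OF Vf_bop])
  have "range A \<subseteq> {u. W u = Vf u}" using WA Vf_A by auto
  moreover have "closed {u. W u = Vf u}"
    by (intro closed_Collect_eq bop_cont bW Vf_bop)
  ultimately have "L \<subseteq> {u. W u = Vf u}" unfolding L_def by (rule closure_minimal)
  then show "W x = Vf x" using e1 e2 P_L by auto
qed

lemma polar_factor_eq:
  "polar_factor T = Vf \<and> partial_isometry Vf \<and> T = Vf \<circ> op_abs T \<and> op_ker Vf = op_ker T"
proof -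
  have "polar_factor T = Vf" unfolding polar_factor_def
    by (rule the_equality) (use Vf_pi Vf_factor Vf_kerset Vf_unique in blast)+
  then show ?thesis using Vf_pi Vf_factor Vf_kerset by simp
qed

lemma polar_props:
  "partial_isometry (polar_factor T) \<and> T = polar_factor T \<circ> op_abs T
    \<and> op_ker (polar_factor T) = op_ker T \<and> (\<forall>x. norm (polar_factor T x) \<le> norm x)"
  using polar_factor_eq Vf_norm P_norm by (metis order.trans)

end




lemma lowbound:
  assumes Asa: "selfadj A" and Apos: "\<And>x. 0 \<le> Re (cinner x (A x))"
    and M: "invariant A M"
    and low: "\<And>v. v \<in> M \<Longrightarrow> \<mu> * norm v \<le> norm (A v)"
    and v: "v \<in> M"
  shows "\<mu> * (norm v)\<^sup>2 \<le> Re (cinner v (A v))"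
proof (cases "\<mu> \<le> 0")
  case True
  then have "\<mu> * (norm v)\<^sup>2 \<le> 0" by (simp add: mult_nonpos_nonneg)
  then show ?thesis using Apos[of v] by linarith
next
  case False
  then have mu: "\<mu> > 0" by simp
  have bA: "bounded_op A" using Asa by (simp add: selfadj_def)
  have csM: "csubspace M" using M by (simp add: invariant_def)
  have AM: "A u \<in> M" if "u \<in> M" for u using M that by (simp add: invariant_def)
  define q where "q u = Re (cinner u (A u))" for u
  have q_scale: "q (r *\<^sub>R u) = r\<^sup>2 * q u" for r u
    by (simp add: q_def bop_scaleR[OF bA] cinner_scaleR_left cinner_scaleR_right power2_eq_square)
  show ?thesis
  proof (rule ccontr)
    assume neg: "\<not> ?thesis"
    then have qv: "q v < \<mu> * (norm v)\<^sup>2" by (simp add: q_def)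
    have v0: "v \<noteq> 0"
    proof
      assume "v = 0" then show False using qv by (simp add: q_def)
    qed
    then have nv: "norm v > 0" by simp
    define S where "S = {q w | w. w \<in> M \<and> norm w = 1}"
    define w0 where "w0 = (1 / norm v) *\<^sub>R v"
    have w0M: "w0 \<in> M" unfolding w0_def by (rule csubspace_scaleR[OF csM v])
    have nw0: "norm w0 = 1" using nv by (simp add: w0_def)
    have qw0: "q w0 < \<mu>"
    proof -
      have "q w0 = q v / (norm v)\<^sup>2" using nv by (simp add: w0_def q_scale power2_eq_square field_simps)
      also have "\<dots> < \<mu>" using qv nv by (simp add: field_simps)
      finally show ?thesis .
    qed
    have Sne: "S \<noteq> {}" using w0M nw0 S_def by blast
    have Sbd: "bdd_below S" unfolding S_def bdd_below_def q_def using Apos by blast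
    define c where "c = Inf S"
    have c_le: "c \<le> s" if "s \<in> S" for s unfolding c_def by (rule cInf_lower[OF that Sbd])
    have c0: "0 \<le> c" unfolding c_def by (rule cInf_greatest[OF Sne]) (auto simp: S_def q_def Apos)
    have cmu: "c < \<mu>" using c_le[of "q w0"] qw0 w0M nw0 S_def by fastforce
    have cq: "c * (norm u)\<^sup>2 \<le> q u" if u: "u \<in> M" for u
    proof (cases "u = 0")
      case True then show ?thesis by (simp add: q_def bop_zero[OF bA])
    next
      case False
      then have nu: "norm u > 0" by simp
      define w where "w = (1 / norm u) *\<^sub>R u"
      have "w \<in> M" unfolding w_def by (rule csubspace_scaleR[OF csM u])
      moreover have "norm w = 1" using nu by (simp add: w_def)
      ultimately have "c \<le> q w" using c_le S_def by blast
      also have "q w = q u / (norm u)\<^sup>2" using nu by (simp add: w_def q_scale power2_eq_square field_simps)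
      finally show ?thesis using nu by (simp add: field_simps)
    qed
    define C where "C x = A x - c *\<^sub>R x" for x
    have bC: "bounded_op C" unfolding C_def[abs_def] by (intro bop_minus_op bA bop_scale bop_id)
    have Csa: "selfadj C" using bC Asa
      by (simp add: selfadj_def C_def cinner_diff_left cinner_diff_right cinner_scaleR_left cinner_scaleR_right)
    have CM: "invariant C M" unfolding invariant_def C_def
      using csM AM by (auto intro: csubspace_diff csubspace_scaleR)
    have Cq: "Re (cinner u (C u)) = q u - c * (norm u)\<^sup>2" for u
      by (simp add: C_def q_def cinner_diff_right cinner_scaleR_right Re_cinner_self)
    have Cpos: "0 \<le> Re (cinner u (C u))" if "u \<in> M" for u using cq[OF that] Cq[of u] by simp
    define K where "K = onorm C"
    have K0: "0 \<le> K" unfolding K_def by (rule bop_onorm_nonneg[OF bC])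
    define eps where "eps = (\<mu> - c)\<^sup>2 / (K + 1)"
    have eps0: "eps > 0" using cmu K0 by (simp add: eps_def)
    have "Inf S < c + eps" using eps0 c_def by simp
    then obtain s where "s \<in> S" "s < c + eps" using cInf_lessD[OF Sne] by blast
    then obtain w where wM: "w \<in> M" and nw: "norm w = 1" and qw: "q w < c + eps" unfolding S_def by blast
    have r0: "0 \<le> Re (cinner w (C w))" by (rule Cpos[OF wM])
    have rle: "Re (cinner w (C w)) < eps" using Cq[of w] nw qw by simp
    have "(norm (C w))\<^sup>2 \<le> K * Re (cinner w (C w))"
      unfolding K_def by (rule posCS[OF Csa CM Cpos wM])
    also have "\<dots> \<le> K * eps" using rle K0 by (intro mult_left_mono) auto
    also have "\<dots> < (\<mu> - c)\<^sup>2"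
    proof -
      have "K * eps = (\<mu> - c)\<^sup>2 * (K / (K + 1))" using K0 by (simp add: eps_def field_simps)
      also have "\<dots> < (\<mu> - c)\<^sup>2 * 1" using K0 cmu by (intro mult_strict_left_mono) auto
      finally show ?thesis by simp
    qed
    finally have "norm (C w) < \<mu> - c" using cmu by (simp add: power_less_imp_less_base)
    moreover have "norm (A w) \<le> norm (C w) + c"
    proof -
      have "A w = C w + c *\<^sub>R w" by (simp add: C_def)
      then have "norm (A w) \<le> norm (C w) + norm (c *\<^sub>R w)" by (metis norm_triangle_ineq)
      then show ?thesis using nw c0 by simp
    qed
    moreover have "\<mu> \<le> norm (A w)" using low[OF wM] nw by simp
    ultimately show False by linarith
  qed
qed

lemma main_ineq:
  fixes T :: "'a::complex_hilbert \<Rightarrow> 'a"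
  assumes T: "bounded_op T" and X: "partial_isometry X" and kX: "op_ker X = op_ker T"
  shows "onorm (\<lambda>x. T x - polar_factor T x) \<le> onorm (\<lambda>x. T x - X x)"
proof -
  define V where "V = polar_factor T"
  define A where "A = op_abs T"
  have Vp: "partial_isometry V" "T = V \<circ> A" "op_ker V = op_ker T" "\<And>x. norm (V x) \<le> norm x"
    using polar_props[OF T] by (auto simp: V_def A_def)
  have bV: "bounded_op V" using Vp(1) by (simp add: partial_isometry_def)
  have bX: "bounded_op X" using X by (simp add: partial_isometry_def)
  have XXX: "X (adj X (X x)) = X x" for x using X unfolding partial_isometry_def by (metis comp_apply)
  have kerX: "X z = 0 \<longleftrightarrow> T z = 0" for z using kX by (auto simp: op_ker_def set_eq_iff)
  have kerV: "V z = 0 \<longleftrightarrow> T z = 0" for z using Vp(3) by (auto simp: op_ker_def set_eq_iff)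
  have TVA: "T y = V (A y)" for y using Vp(2) by (metis comp_apply)
  have Asa: "selfadj A" unfolding A_def by (rule op_abs_sa[OF T])
  have bA: "bounded_op A" using Asa by (simp add: selfadj_def)
  have Apos: "0 \<le> Re (cinner x (A x))" for x using op_abs_pos[OF T] by (simp add: positive_op_def A_def)
  have nA: "norm (A x) = norm (T x)" for x unfolding A_def by (rule op_abs_norm[OF T])
  define TX where "TX x = T x - X x" for x
  have bTX: "bounded_op TX" unfolding TX_def[abs_def] by (rule bop_minus_op[OF T bX])
  define \<delta> where "\<delta> = onorm TX"
  have d0: "0 \<le> \<delta>" unfolding \<delta>_def by (rule bop_onorm_nonneg[OF bTX])
  have dle: "norm (T x - X x) \<le> \<delta> * norm x" for x using bop_norm[OF bTX, of x] by (simp add: TX_def \<delta>_def)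
  define M where "M = {u. \<forall>k. T k = 0 \<longrightarrow> cinner k u = 0}"
  have csM: "csubspace M" unfolding csubspace_def M_def
    by (auto simp: cinner_add_right cinner_scaleC_right)
  have AM: "invariant A M" unfolding invariant_def
  proof (intro conjI csM ballI)
    fix u assume u: "u \<in> M"
    show "A u \<in> M" unfolding M_def
    proof (intro CollectI allI impI)
      fix k assume "T k = 0"
      then have "A k = 0" using nA[of k] by simp
      moreover have "cinner k (A u) = cinner (A k) u" using Asa by (simp add: selfadj_def)
      ultimately show "cinner k (A u) = 0" by simp
    qed
  qed
  have Xiso: "norm (X v) = norm v" if v: "v \<in> M" for v
  proof -
    define E where "E = adj X (X v)"
    have "X (v - E) = 0" by (simp add: E_def bop_diff[OF bX] XXX)
    then have "T (v - E) = 0" using kerX by blast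
    then have o: "cinner (v - E) v = 0" using v by (simp add: M_def)
    have "(norm (X v))\<^sup>2 = Re (cinner v E)"
      by (simp add: E_def adj_prop[OF bX, symmetric] Re_cinner_self)
    also have "cinner v E = cinner v v - cinner v (v - E)" by (simp add: cinner_diff_right)
    also have "cinner v (v - E) = 0" using o by (subst cinner_cnj) simp
    finally have "(norm (X v))\<^sup>2 = (norm v)\<^sup>2" by (simp add: Re_cinner_self)
    then show ?thesis by (metis norm_ge_zero power2_eq_iff_nonneg)
  qed
  have Abnd: "(1 - \<delta>) * norm v \<le> norm (A v) \<and> norm (A v) \<le> (1 + \<delta>) * norm v" if v: "v \<in> M" for v
  proof -
    have "\<bar>norm (T v) - norm (X v)\<bar> \<le> \<delta> * norm v" using norm_triangle_ineq3[of "T v" "X v"] dle[of v] by linarith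
    then show ?thesis using Xiso[OF v] nA[of v] by (simp add: algebra_simps abs_le_iff)
  qed
  have qlow: "(1 - \<delta>) * (norm v)\<^sup>2 \<le> Re (cinner v (A v))" if "v \<in> M" for v
    by (rule lowbound[OF Asa Apos AM _ that]) (use Abnd in blast)
  have qup: "Re (cinner v (A v)) \<le> (1 + \<delta>) * (norm v)\<^sup>2" if v: "v \<in> M" for v
  proof -
    have "Re (cinner v (A v)) \<le> cmod (cinner v (A v))" by (rule complex_Re_le_cmod)
    also have "\<dots> \<le> norm v * norm (A v)" by (rule cinner_Cauchy_Schwarz)
    also have "\<dots> \<le> norm v * ((1 + \<delta>) * norm v)" using Abnd[OF v] by (intro mult_left_mono) auto
    finally show ?thesis by (simp add: power2_eq_square algebra_simps)
  qed
  define D where "D x = A x - x" for x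
  have bD: "bounded_op D" unfolding D_def[abs_def] by (intro bop_minus_op bA bop_id)
  have Dsa: "selfadj D" using bD Asa by (simp add: selfadj_def D_def cinner_diff_left cinner_diff_right)
  have DM: "invariant D M" using AM csM unfolding invariant_def D_def by (auto intro: csubspace_diff)
  have Dnum: "\<bar>Re (cinner v (D v))\<bar> \<le> \<delta> * (norm v)\<^sup>2" if v: "v \<in> M" for v
  proof -
    have "Re (cinner v (D v)) = Re (cinner v (A v)) - (norm v)\<^sup>2"
      by (simp add: D_def cinner_diff_right Re_cinner_self)
    then show ?thesis using qlow[OF v] qup[OF v] by (simp add: abs_le_iff algebra_simps)
  qed
  have Dbnd: "norm (A u - u) \<le> \<delta> * norm u" if "u \<in> M" for u
    using numrad[OF Dsa DM Dnum that] by (simp add: D_def)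
  have main: "norm (T x - V x) \<le> \<delta> * norm x" for x
  proof -
    define u where "u = adj X (X x)"
    have uM: "u \<in> M" unfolding M_def
    proof (intro CollectI allI impI)
      fix k assume "T k = 0"
      then have "X k = 0" using kerX by blast
      then show "cinner k u = 0" by (simp add: u_def adj_prop[OF bX, symmetric])
    qed
    have "X (x - u) = 0" by (simp add: u_def bop_diff[OF bX] XXX)
    then have Txu: "T (x - u) = 0" using kerX by blast
    then have Vxu: "V (x - u) = 0" using kerV by blast
    have o: "Re (cinner (x - u) u) = 0"
    proof -
      have "cinner (x - u) u = 0" using uM Txu by (simp add: M_def)
      then show ?thesis by simp
    qed
    have "(norm ((x - u) + u))\<^sup>2 = (norm (x - u))\<^sup>2 + 2 * Re (cinner (x - u) u) + (norm u)\<^sup>2"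
      by (rule norm_add_sq)
    then have "(norm x)\<^sup>2 = (norm (x - u))\<^sup>2 + (norm u)\<^sup>2" by (simp only: o diff_add_cancel)
    then have "(norm u)\<^sup>2 \<le> (norm x)\<^sup>2" by simp
    then have ux: "norm u \<le> norm x" by (rule power2_le_imp_le) simp
    have "T x - V x = T u - V u"
      using Txu Vxu by (simp add: bop_diff[OF T] bop_diff[OF bV])
    also have "\<dots> = V (A u - u)" by (simp add: TVA bop_diff[OF bV])
    finally have "norm (T x - V x) = norm (V (A u - u))" by simp
    also have "\<dots> \<le> norm (A u - u)" by (rule Vp(4))
    also have "\<dots> \<le> \<delta> * norm u" by (rule Dbnd[OF uM])
    also have "\<dots> \<le> \<delta> * norm x" using ux d0 by (rule mult_left_mono)
    finally show ?thesis .
  qed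
  have "onorm (\<lambda>x. T x - V x) \<le> \<delta>" by (rule onorm_bound[OF d0 main])
  moreover have "TX = (\<lambda>x. T x - X x)" by (simp add: TX_def[abs_def])
  ultimately show ?thesis by (simp add: V_def \<delta>_def)
qed

theorem corollary2p4:
  fixes T :: "'a::complex_hilbert \<Rightarrow> 'a"
  assumes "separable_space (euclidean :: 'a topology)"
    and "bounded_op T"
  shows "onorm (\<lambda>x. T x - polar_factor T x) \<in>
           {onorm (\<lambda>x. T x - X x) | X. partial_isometry X \<and> op_ker X = op_ker T}
       \<and> (\<forall>X. partial_isometry X \<and> op_ker X = op_ker T \<longrightarrow>
             onorm (\<lambda>x. T x - polar_factor T x) \<le> onorm (\<lambda>x. T x - X x))"
proof -
  have "partial_isometry (polar_factor T)" "op_ker (polar_factor T) = op_ker T"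
    using polar_props[OF assms(2)] by auto
  then have "onorm (\<lambda>x. T x - polar_factor T x) \<in>
           {onorm (\<lambda>x. T x - X x) | X. partial_isometry X \<and> op_ker X = op_ker T}" by blast
  moreover have "\<forall>X. partial_isometry X \<and> op_ker X = op_ker T \<longrightarrow>
             onorm (\<lambda>x. T x - polar_factor T x) \<le> onorm (\<lambda>x. T x - X x)"
    using main_ineq[OF assms(2)] by blast
  ultimately show ?thesis by blast
qed


end
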